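(* Let $\mathcal P$ be a finite-dimensional Poisson $n$-Lie algebra over an algebraically closed field of characteristic zero. Then $\mathcal P$ is solvable if and only if the ideal $\mathcal P^2=[\mathcal P,\dots,\mathcal P]+\mathcal P\cdot\mathcal P$ is nilpotent.
   Context: A Poisson $n$-Lie algebra is a commutative associative algebra $(\mathcal P,\cdot)$ with an $n$-linear skew-symmetric bracket satisfying the fundamental identity $[x_1,\dots,x_{n-1},[y_1,\dots,y_n]]=\sum_{i=1}^n[y_1,\dots,[x_1,\dots,x_{n-1},y_i],\dots,y_n]$ and the Leibniz rule $[y\cdot z,x_2,\dots,x_n]=y\cdot[z,x_2,\dots,x_n]+z\cdot[y,x_2,\dots,x_n]$. Products/brackets of subspaces are linear spans. For an ideal $\mathcal I$: $\mathcal I^{(1)}=\mathcal I$, $\mathcal I^{(k+1)}=[\mathcal I^{(k)},\mathcal I^{(k)},\mathcal P,\dots,\mathcal P]+\mathcal I^{(k)}\cdot\mathcal I^{(k)}$; $\mathcal I^1=\mathcal I$, $\mathcal I^{k+1}=[\mathcal I^k,\mathcal I,\mathcal P,\dots,\mathcal P]+\mathcal I^k\cdot\mathcal I$. $\mathcal I$ is solvable (resp. nilpotent) if $\mathcal I^{(s)}=0$ (resp. $\mathcal I^s=0$) for some $s$; $\mathcal P$ is solvable if the ideal $\mathcal P$ is. *)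

theory Defs
  imports "HOL-Computational_Algebra.Polynomial"
begin

text \<open>The n-ary bracket is a function br on lists,
  only meaningful on lists of length n.\<close>

definition poisson_nlie ::
  "('k::field \<Rightarrow> 'v::ab_group_add \<Rightarrow> 'v) \<Rightarrow> nat \<Rightarrow> ('v list \<Rightarrow> 'v) \<Rightarrow> ('v \<Rightarrow> 'v \<Rightarrow> 'v) \<Rightarrow> bool"
where
  "poisson_nlie scl n br mul \<longleftrightarrow>
     vector_space scl \<and>
     \<comment> \<open>commutative associative algebra (bilinear product)\<close>
     (\<forall>a x y z. mul (scl a x + y) z = scl a (mul x z) + mul y z) \<and>
     (\<forall>x y. mul x y = mul y x) \<and>
     (\<forall>x y z. mul (mul x y) z = mul x (mul y z)) \<and>
     \<comment> \<open>n-linearity of the bracket\<close>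
     (\<forall>xs ys a x y. length xs + length ys + 1 = n \<longrightarrow>
        br (xs @ (scl a x + y) # ys) = scl a (br (xs @ x # ys)) + br (xs @ y # ys)) \<and>
     \<comment> \<open>skew-symmetry (swapping two adjacent arguments changes the sign)\<close>
     (\<forall>xs ys x y. length xs + length ys + 2 = n \<longrightarrow>
        br (xs @ x # y # ys) = - br (xs @ y # x # ys)) \<and>
     \<comment> \<open>fundamental identity\<close>
     (\<forall>xs ys. length xs + 1 = n \<longrightarrow> length ys = n \<longrightarrow>
        br (xs @ [br ys]) = (\<Sum>i<n. br (ys[i := br (xs @ [ys ! i])]))) \<and>
     \<comment> \<open>Leibniz rule\<close>
     (\<forall>y z xs. length xs + 1 = n \<longrightarrow>
        br (mul y z # xs) = mul y (br (z # xs)) + mul z (br (y # xs)))"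

text \<open>Derived series, 0-based: pderived ... I k is the paper's I^(k+1).\<close>
fun pderived ::
  "('k::field \<Rightarrow> 'v::ab_group_add \<Rightarrow> 'v) \<Rightarrow> nat \<Rightarrow> ('v list \<Rightarrow> 'v) \<Rightarrow> ('v \<Rightarrow> 'v \<Rightarrow> 'v) \<Rightarrow> 'v set \<Rightarrow> nat \<Rightarrow> 'v set"
where
  "pderived scl n br mul I 0 = I"
| "pderived scl n br mul I (Suc k) =
     module.span scl
       ({br (a # b # xs) | a b xs. a \<in> pderived scl n br mul I k \<and> b \<in> pderived scl n br mul I k
                                  \<and> length xs = n - 2}
        \<union> {mul a b | a b. a \<in> pderived scl n br mul I k \<and> b \<in> pderived scl n br mul I k})"

text \<open>Lower central series, 0-based: plower ... I k is the paper's I^(k+1).\<close>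
fun plower ::
  "('k::field \<Rightarrow> 'v::ab_group_add \<Rightarrow> 'v) \<Rightarrow> nat \<Rightarrow> ('v list \<Rightarrow> 'v) \<Rightarrow> ('v \<Rightarrow> 'v \<Rightarrow> 'v) \<Rightarrow> 'v set \<Rightarrow> nat \<Rightarrow> 'v set"
where
  "plower scl n br mul I 0 = I"
| "plower scl n br mul I (Suc k) =
     module.span scl
       ({br (a # b # xs) | a b xs. a \<in> plower scl n br mul I k \<and> b \<in> I \<and> length xs = n - 2}
        \<union> {mul a b | a b. a \<in> plower scl n br mul I k \<and> b \<in> I})"

definition psolvable where
  "psolvable scl n br mul I \<longleftrightarrow> (\<exists>s. pderived scl n br mul I s = {0})"

definition pnilpotent where
  "pnilpotent scl n br mul I \<longleftrightarrow> (\<exists>s. plower scl n br mul I s = {0})"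

definition psquare where
  "psquare scl n br mul =
     module.span scl ({br xs | xs. length xs = n} \<union> {mul a b | a b. True})"

end

theory Submission
  imports Defs
begin


locale fdv = finite_dimensional_vector_space scale Basis
  for scale :: "'a::{alg_closed_field,field_char_0} \<Rightarrow> 'b::ab_group_add \<Rightarrow> 'b" and Basis
begin

notation scale (infixr "*s" 75)

definition lin :: "('b \<Rightarrow> 'b) \<Rightarrow> bool" where
  "lin f \<longleftrightarrow> (\<forall>x y. f (x + y) = f x + f y) \<and> (\<forall>c x. f (c *s x) = c *s f x)"

lemma lin_add: "lin f \<Longrightarrow> f (x + y) = f x + f y" by (simp add: lin_def)
lemma lin_scale: "lin f \<Longrightarrow> f (c *s x) = c *s f x" by (simp add: lin_def)
lemma lin_0: "lin f \<Longrightarrow> f 0 = 0"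
  by (metis lin_scale scale_zero_left)
lemma lin_neg: "lin f \<Longrightarrow> f (- x) = - f x"
  by (metis add_eq_0_iff lin_0 lin_add neg_eq_iff_add_eq_0)
lemma lin_diff: "lin f \<Longrightarrow> f (x - y) = f x - f y"
  by (metis diff_conv_add_uminus lin_add lin_neg)
lemma lin_sum: "lin f \<Longrightarrow> f (\<Sum>i\<in>I. g i) = (\<Sum>i\<in>I. f (g i))"
  by (induction I rule: infinite_finite_induct) (auto simp: lin_0 lin_add)
lemma lin_pow: "lin f \<Longrightarrow> lin (f ^^ k)"
  by (induction k) (auto simp: lin_def)

definition Kry :: "'b set \<Rightarrow> ('b \<Rightarrow> 'b) \<Rightarrow> 'b \<Rightarrow> nat \<Rightarrow> 'b set" where
  "Kry W f u k = {x. \<exists>w\<in>W. \<exists>a. x = w + (\<Sum>j<k. a j *s (f^^j) u)}"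

lemma Kry0: "Kry W f u 0 = W" by (auto simp: Kry_def)

lemma KryW: "w \<in> W \<Longrightarrow> w \<in> Kry W f u k"
  unfolding Kry_def by (rule CollectI, rule bexI[of _ w], rule exI[of _ "\<lambda>_. 0"]) auto

lemma Kry_sub: assumes "subspace W" shows "subspace (Kry W f u k)"
  unfolding subspace_def
proof (intro conjI ballI allI)
  show "0 \<in> Kry W f u k" using KryW subspace_0[OF assms] by blast
next
  fix x y assume "x \<in> Kry W f u k" "y \<in> Kry W f u k"
  then obtain w a w' b where "w \<in> W" "x = w + (\<Sum>j<k. a j *s (f^^j) u)"
      "w' \<in> W" "y = w' + (\<Sum>j<k. b j *s (f^^j) u)" by (auto simp: Kry_def)
  then have "x + y = (w + w') + (\<Sum>j<k. (a j + b j) *s (f^^j) u)"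
    by (simp add: scale_left_distrib sum.distrib algebra_simps)
  then show "x + y \<in> Kry W f u k" using subspace_add[OF assms \<open>w\<in>W\<close> \<open>w'\<in>W\<close>]
    by (auto simp: Kry_def)
next
  fix c x assume "x \<in> Kry W f u k"
  then obtain w a where "w \<in> W" "x = w + (\<Sum>j<k. a j *s (f^^j) u)" by (auto simp: Kry_def)
  then have "c *s x = c *s w + (\<Sum>j<k. (c * a j) *s (f^^j) u)"
    by (simp add: scale_right_distrib scale_sum_right)
  then show "c *s x \<in> Kry W f u k" using subspace_scale[OF assms \<open>w\<in>W\<close>]
    by (auto simp: Kry_def)
qed

lemma Kry_vec: "j < k \<Longrightarrow> subspace W \<Longrightarrow> (f^^j) u \<in> Kry W f u k"
proof -
  assume a: "j < k" "subspace W"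
  have "(\<Sum>i<k. (if i = j then 1 else 0) *s (f^^i) u) = (\<Sum>i<k. if i = j then (f^^i) u else 0)"
    by (rule sum.cong) auto
  also have "\<dots> = (f^^j) u" using a by simp
  finally show ?thesis unfolding Kry_def using subspace_0[OF a(2)]
    by (intro CollectI bexI[of _ 0] exI[of _ "\<lambda>i. if i = j then 1 else 0"]) auto
qed

lemma Kry_mono: assumes "j \<le> k" shows "Kry W f u j \<subseteq> Kry W f u k"
proof
  fix x assume "x \<in> Kry W f u j"
  then obtain w a where "w \<in> W" "x = w + (\<Sum>i<j. a i *s (f^^i) u)" by (auto simp: Kry_def)
  moreover have "(\<Sum>i<j. a i *s (f^^i) u) = (\<Sum>i<k. (if i < j then a i else 0) *s (f^^i) u)"
    using assms by (intro sum.mono_neutral_cong_left) auto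
  ultimately show "x \<in> Kry W f u k" by (auto simp: Kry_def)
qed

lemma Kry_map:
  assumes "lin g" "subspace S" "\<And>w. w \<in> W \<Longrightarrow> g w \<in> S" "\<And>j. j < k \<Longrightarrow> g ((f^^j) u) \<in> S"
    and "x \<in> Kry W f u k"
  shows "g x \<in> S"
proof -
  obtain w a where "w \<in> W" "x = w + (\<Sum>i<k. a i *s (f^^i) u)" using assms(5) by (auto simp: Kry_def)
  then have "g x = g w + (\<Sum>i<k. a i *s g ((f^^i) u))"
    using assms(1) by (simp add: lin_add lin_sum lin_scale)
  then show ?thesis using assms \<open>w\<in>W\<close>
    by (auto intro!: subspace_add subspace_sum subspace_scale)
qed

lemma Kry_shift:
  assumes "subspace W" "lin f" "\<And>w. w \<in> W \<Longrightarrow> f w \<in> W" "x \<in> Kry W f u k"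
  shows "f x \<in> Kry W f u (Suc k)"
proof (rule Kry_map[where g=f and S="Kry W f u (Suc k)" and W=W and f=f and u=u and k=k])
  show "lin f" by (rule assms(2))
  show "subspace (Kry W f u (Suc k))" by (rule Kry_sub[OF assms(1)])
  show "x \<in> Kry W f u k" by (rule assms(4))
  show "f w \<in> Kry W f u (Suc k)" if "w \<in> W" for w by (rule KryW[OF assms(3)[OF that]])
  show "f ((f ^^ j) u) \<in> Kry W f u (Suc k)" if "j < k" for j
    using Kry_vec[of "Suc j" "Suc k" W f u] that assms(1) by simp
qed

lemma Kry_bound:
  assumes W: "subspace W" and nin: "\<And>k. k < N \<Longrightarrow> (f^^k) u \<notin> Kry W f u k"
  shows "N \<le> dim UNIV"
proof -
  have "independent ((\<lambda>k. (f^^k) u) ` {..<M}) \<and> card ((\<lambda>k. (f^^k) u) ` {..<M}) = M"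
    if "M \<le> N" for M
    using that
  proof (induction M)
    case 0 then show ?case by (simp add: independent_empty)
  next
    case (Suc M)
    let ?S = "(\<lambda>k. (f^^k) u) ` {..<M}"
    have IH: "independent ?S \<and> card ?S = M" using Suc.IH Suc.prems by simp
    have "?S \<subseteq> Kry W f u M"
    proof
      fix x assume "x \<in> ?S"
      then obtain k where "k < M" "x = (f^^k) u" by blast
      then show "x \<in> Kry W f u M" using Kry_vec[OF \<open>k < M\<close> W] by simp
    qed
    then have "span ?S \<subseteq> Kry W f u M" by (rule span_minimal[OF _ Kry_sub[OF W]])
    moreover have "(f^^M) u \<notin> Kry W f u M" using nin Suc.prems by simp
    ultimately have n1: "(f^^M) u \<notin> span ?S" by blast
    have n2: "(f^^M) u \<notin> ?S"
    proof
      assume "(f^^M) u \<in> ?S"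
      then have "(f^^M) u \<in> span ?S" by (rule span_base)
      with n1 show False by simp
    qed
    have eq: "(\<lambda>k. (f^^k) u) ` {..<Suc M} = insert ((f^^M) u) ?S"
      by (simp add: lessThan_Suc)
    have fin: "finite ?S" by simp
    show ?case unfolding eq
      using independent_insertI[OF n1 conjunct1[OF IH]] card_insert_disjoint[OF fin n2] IH by simp
  qed
  then have "independent ((\<lambda>k. (f^^k) u) ` {..<N})" "card ((\<lambda>k. (f^^k) u) ` {..<N}) = N"
    by auto
  then show ?thesis using independent_card_le_dim[of "(\<lambda>k. (f^^k) u) ` {..<N}" UNIV] by simp
qed

lemma Kry_min:
  assumes "subspace W" "u \<notin> W"
  shows "\<exists>m>0. (f^^m) u \<in> Kry W f u m \<and> (\<forall>k<m. (f^^k) u \<notin> Kry W f u k)"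
proof -
  have ex: "\<exists>k. (f^^k) u \<in> Kry W f u k"
  proof (rule ccontr)
    assume "\<not> ?thesis"
    then have "Suc (dim UNIV) \<le> dim UNIV" using Kry_bound[OF assms(1), of "Suc (dim UNIV)" f u] by blast
    then show False by simp
  qed
  define m where "m = (LEAST k. (f^^k) u \<in> Kry W f u k)"
  have m1: "(f^^m) u \<in> Kry W f u m" unfolding m_def by (rule LeastI_ex[OF ex])
  have m2: "\<forall>k<m. (f^^k) u \<notin> Kry W f u k" unfolding m_def using not_less_Least by blast
  have "m \<noteq> 0"
  proof
    assume "m = 0" then show False using m1 assms by (simp add: Kry0)
  qed
  then show ?thesis using m1 m2 by blast
qed

lemma lin_shift: "lin A \<Longrightarrow> lin (\<lambda>x. A x - \<alpha> *s x)"
  by (simp add: lin_def scale_right_distrib algebra_simps)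


lemma TFL:
  assumes W: "subspace W" and lA: "lin A" and lB: "lin B"
    and AW: "\<And>w. w \<in> W \<Longrightarrow> A w \<in> W" and BW: "\<And>w. w \<in> W \<Longrightarrow> B w \<in> W"
    and m0: "m > 0" and em: "(B^^m) u \<in> Kry W B u m"
    and ek: "(B^^(m-1)) u \<notin> Kry W B u (m-1)"
    and A0: "A u - \<alpha> *s u \<in> W"
    and comm: "\<And>k. k < m \<Longrightarrow> B (A ((B^^k) u)) - A (B ((B^^k) u)) - c *s (B^^k) u \<in> Kry W B u k"
  shows "c = 0"
proof -
  let ?e = "\<lambda>k. (B^^k) u"
  let ?Y = "Kry W B u"
  have Ysub: "subspace (?Y k)" for k using Kry_sub[OF W] .
  have claim: "A (?e (Suc k)) - \<alpha> *s ?e (Suc k) + (of_nat (Suc k) * c) *s ?e k \<in> ?Y k" if "k < m" for k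
    using that
  proof (induction k)
    case 0
    have w: "B (A u - \<alpha> *s u) \<in> W" using BW A0 by blast
    have c0: "B (A u) - A (B u) - c *s u \<in> W" using comm[OF 0] by (simp add: Kry0)
    have "A (B u) - \<alpha> *s B u + c *s u = B (A u - \<alpha> *s u) - (B (A u) - A (B u) - c *s u)"
      using lB by (simp add: lin_diff lin_scale algebra_simps)
    also have "\<dots> \<in> W" using w c0 subspace_diff[OF W] by blast
    finally show ?case by (simp add: Kry0)
  next
    case (Suc k)
    let ?x = "A (?e (Suc k)) - \<alpha> *s ?e (Suc k) + (of_nat (Suc k) * c) *s ?e k"
    have x: "?x \<in> ?Y k" using Suc by simp
    have Bx: "B ?x \<in> ?Y (Suc k)" by (rule Kry_shift[OF W lB BW x])
    have cm: "B (A (?e (Suc k))) - A (B (?e (Suc k))) - c *s ?e (Suc k) \<in> ?Y (Suc k)"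
      using comm[OF Suc.prems] .
    have "A (?e (Suc (Suc k))) - \<alpha> *s ?e (Suc (Suc k)) + (of_nat (Suc (Suc k)) * c) *s ?e (Suc k)
        = B ?x - (B (A (?e (Suc k))) - A (B (?e (Suc k))) - c *s ?e (Suc k))"
      using lB by (simp add: lin_diff lin_add lin_scale algebra_simps scale_left_distrib)
        (metis mult_2_right scale_left_distrib)
    also have "\<dots> \<in> ?Y (Suc k)" using Bx cm subspace_diff[OF Ysub] by blast
    finally show ?case .
  qed
  let ?g = "\<lambda>x. A x - \<alpha> *s x"
  have gm: "?g (?e m) \<in> ?Y (m-1)"
  proof (rule Kry_map[OF lin_shift[OF lA] Ysub _ _ em])
    show "?g w \<in> ?Y (m-1)" if "w \<in> W" for w
      using KryW subspace_diff[OF W AW[OF that] subspace_scale[OF W that]] by blast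
    show "?g (?e j) \<in> ?Y (m-1)" if "j < m" for j
    proof (cases j)
      case 0 then show ?thesis using A0 KryW by simp
    next
      case (Suc i)
      have i: "i < m - 1" using Suc that by simp
      have c1: "?g (?e (Suc i)) + (of_nat (Suc i) * c) *s ?e i \<in> ?Y (m-1)"
        using claim[of i] i Kry_mono[of i "m-1" W B u] by (simp add: algebra_simps) (use i in force)
      have c2: "(of_nat (Suc i) * c) *s ?e i \<in> ?Y (m-1)"
        using Kry_vec[OF i W] subspace_scale[OF Ysub] by blast
      have "?g (?e (Suc i)) = (?g (?e (Suc i)) + (of_nat (Suc i) * c) *s ?e i) - (of_nat (Suc i) * c) *s ?e i"
        by simp
      also have "\<dots> \<in> ?Y (m-1)" using c1 c2 subspace_diff[OF Ysub] by blast
      finally show ?thesis using Suc by simp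
    qed
  qed
  have cl: "?g (?e m) + (of_nat m * c) *s ?e (m-1) \<in> ?Y (m-1)"
    using claim[of "m-1"] m0 by (simp add: algebra_simps)
  have mc: "(of_nat m * c) *s ?e (m-1) \<in> ?Y (m-1)"
  proof -
    have "(of_nat m * c) *s ?e (m-1) = (?g (?e m) + (of_nat m * c) *s ?e (m-1)) - ?g (?e m)" by simp
    also have "\<dots> \<in> ?Y (m-1)" using cl gm subspace_diff[OF Ysub] by blast
    finally show ?thesis .
  qed
  show "c = 0"
  proof (rule ccontr)
    assume "c \<noteq> 0"
    then have nz: "of_nat m * c \<noteq> 0" using m0 by simp
    have "inverse (of_nat m * c) *s ((of_nat m * c) *s ?e (m-1)) \<in> ?Y (m-1)"
      using mc subspace_scale[OF Ysub] by blast
    then have "(inverse (of_nat m * c) * (of_nat m * c)) *s ?e (m-1) \<in> ?Y (m-1)"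
      by (simp only: scale_scale)
    then have "?e (m-1) \<in> ?Y (m-1)" by (simp only: left_inverse[OF nz] scale_one)
    then show False using ek by simp
  qed
qed

definition poly_op :: "'a poly \<Rightarrow> ('b \<Rightarrow> 'b) \<Rightarrow> 'b \<Rightarrow> 'b" where
  "poly_op p f v = (\<Sum>i\<le>degree p. coeff p i *s (f^^i) v)"

lemma poly_op_N: assumes "degree p \<le> N" shows "poly_op p f v = (\<Sum>i\<le>N. coeff p i *s (f^^i) v)"
  unfolding poly_op_def
  by (rule sum.mono_neutral_left) (use assms in \<open>auto simp: coeff_eq_0\<close>)

lemma poly_op_factor:
  assumes "lin f"
  shows "poly_op ([:-r, 1:] * q) f v = f (poly_op q f v) - r *s poly_op q f v"
proof -
  let ?N = "Suc (degree q)"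
  have eq: "[:-r, 1:] * q = pCons 0 q - smult r q" by (simp add: algebra_simps)
  have dg: "degree ([:-r, 1:] * q) \<le> ?N"
    using degree_mult_le[of "[:-r, 1:]" q] by simp
  have "poly_op ([:-r, 1:] * q) f v = (\<Sum>i\<le>?N. coeff (pCons 0 q - smult r q) i *s (f^^i) v)"
    using poly_op_N[OF dg] eq by simp
  also have "\<dots> = (\<Sum>i\<le>?N. coeff (pCons 0 q) i *s (f^^i) v) - r *s (\<Sum>i\<le>?N. coeff q i *s (f^^i) v)"
    by (simp only: coeff_diff coeff_smult scale_left_diff_distrib sum_subtractf scale_sum_right scale_scale)
  also have "(\<Sum>i\<le>?N. coeff (pCons 0 q) i *s (f^^i) v) = (\<Sum>i\<le>degree q. coeff q i *s (f^^(Suc i)) v)"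
    by (subst sum.atMost_Suc_shift) simp
  also have "\<dots> = f (poly_op q f v)"
    unfolding poly_op_def using assms by (simp add: lin_sum lin_scale)
  also have "(\<Sum>i\<le>?N. coeff q i *s (f^^i) v) = poly_op q f v"
    by (rule poly_op_N[symmetric]) simp
  finally show ?thesis .
qed

lemma pow_pres: assumes "\<And>x. x \<in> E \<Longrightarrow> f x \<in> E" "u \<in> E" shows "(f^^k) u \<in> E"
  by (induction k) (use assms in auto)

lemma EIG:
  assumes W: "subspace W" and E: "subspace E" and WE: "W \<subseteq> E" and uE: "u \<in> E" and uW: "u \<notin> W"
    and lf: "lin f" and fE: "\<And>x. x \<in> E \<Longrightarrow> f x \<in> E" and fW: "\<And>x. x \<in> W \<Longrightarrow> f x \<in> W"
  shows "\<exists>\<alpha> v. v \<in> E \<and> v \<notin> W \<and> f v - \<alpha> *s v \<in> W"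
proof -
  let ?e = "\<lambda>k. (f^^k) u"
  obtain m where m0: "m > 0" and mY: "?e m \<in> Kry W f u m" and mmin: "\<forall>k<m. ?e k \<notin> Kry W f u k"
    using Kry_min[OF W uW] by blast
  obtain w a where w: "w \<in> W" and em: "?e m = w + (\<Sum>j<m. a j *s ?e j)"
    using mY by (auto simp: Kry_def)
  define p where "p = monom 1 m - (\<Sum>j<m. monom (a j) j)"
  have dS: "degree (\<Sum>j<m. monom (a j) j) < m"
    using m0 by (intro degree_sum_less) (auto intro: le_less_trans[OF degree_monom_le])
  have dp: "degree p = m"
  proof -
    have "p = monom 1 m + - (\<Sum>j<m. monom (a j) j)" by (simp add: p_def)
    moreover have "degree (- (\<Sum>j<m. monom (a j) j)) < degree (monom (1::'a) m)"
      using dS by (simp add: degree_monom_eq)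
    ultimately have "degree p = degree (monom (1::'a) m)" using degree_add_eq_left by metis
    then show ?thesis by (simp add: degree_monom_eq)
  qed
  have cp: "coeff p i = (if i = m then 1 else 0) - (if i < m then a i else 0)" for i
  proof -
    have "coeff (\<Sum>j<m. monom (a j) j) i = (\<Sum>j<m. if j = i then a j else 0)"
      by (simp add: coeff_sum coeff_monom)
    also have "\<dots> = (if i < m then a i else 0)" by simp
    finally have cs: "coeff (\<Sum>j<m. monom (a j) j) i = (if i < m then a i else 0)" .
    show ?thesis unfolding p_def coeff_diff cs by (auto simp: coeff_monom)
  qed
  have pw: "poly_op p f u = w"
  proof -
    have "poly_op p f u = (\<Sum>i\<le>m. coeff p i *s ?e i)" unfolding poly_op_def dp ..
    also have "\<dots> = (\<Sum>i<Suc m. coeff p i *s ?e i)" by (simp add: lessThan_Suc_atMost)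
    also have "\<dots> = (\<Sum>i<m. coeff p i *s ?e i) + coeff p m *s ?e m" by simp
    also have "(\<Sum>i<m. coeff p i *s ?e i) = (\<Sum>i<m. - (a i *s ?e i))"
      by (rule sum.cong) (auto simp: cp)
    also have "\<dots> = - (\<Sum>i<m. a i *s ?e i)" by (rule sum_negf)
    also have "coeff p m *s ?e m = ?e m" by (simp add: cp)
    finally show ?thesis using em by simp
  qed
  have "0 < degree p" using dp m0 by simp
  then obtain r where "poly p r = 0" using alg_closed_imp_poly_has_root by blast
  then obtain q where pq: "p = [:-r, 1:] * q" using poly_eq_0_iff_dvd by (metis dvdE)
  have pnz: "p \<noteq> 0" using dp m0 by auto
  then have qnz: "q \<noteq> 0" using pq by auto
  have dq: "degree q = m - 1" using degree_mult_eq[of "[:-r, 1:]" q] qnz dp pq by simp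
  have lq: "coeff q (m - 1) = 1"
  proof -
    have "1 = lead_coeff p" using dp cp by simp
    also have "\<dots> = lead_coeff [:-r, 1:] * lead_coeff q" unfolding pq by (rule lead_coeff_mult)
    also have "\<dots> = coeff q (m-1)" using dq by simp
    finally show ?thesis by simp
  qed
  define v where "v = poly_op q f u"
  have vE: "v \<in> E" unfolding v_def poly_op_def
    by (rule subspace_sum[OF E]) (intro subspace_scale[OF E] pow_pres[OF fE uE])
  have vsplit: "v = ?e (m-1) + (\<Sum>i<m-1. coeff q i *s ?e i)"
  proof -
    have "v = (\<Sum>i<Suc (m-1). coeff q i *s ?e i)" unfolding v_def poly_op_def dq
      by (simp add: lessThan_Suc_atMost)
    then show ?thesis using lq by (simp add: add.commute)
  qed
  have vW: "v \<notin> W"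
  proof
    assume "v \<in> W"
    have s: "(\<Sum>i<m-1. coeff q i *s ?e i) \<in> Kry W f u (m-1)"
      by (rule subspace_sum[OF Kry_sub[OF W]]) (intro subspace_scale[OF Kry_sub[OF W]] Kry_vec[OF _ W], simp)
    have "?e (m-1) = v - (\<Sum>i<m-1. coeff q i *s ?e i)" using vsplit by simp
    also have "\<dots> \<in> Kry W f u (m-1)"
      by (rule subspace_diff[OF Kry_sub[OF W] KryW[OF \<open>v \<in> W\<close>] s])
    finally show False using mmin m0 by simp
  qed
  have "f v - r *s v = w" using poly_op_factor[OF lf, of r q u] pw pq by (simp add: v_def)
  then show ?thesis using vE vW w by blast
qed

lemma sumlist_weight:
  assumes S: "subspace S" and h: "\<And>h. h \<in> set hs \<Longrightarrow> h v - c h *s v \<in> S"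
  shows "sum_list (map (\<lambda>h. h v) hs) - (sum_list (map c hs)) *s v \<in> S"
  using h
proof (induction hs)
  case Nil then show ?case using subspace_0[OF S] by simp
next
  case (Cons h hs)
  have "sum_list (map (\<lambda>h. h v) (h # hs)) - (sum_list (map c (h # hs))) *s v
      = (h v - c h *s v) + (sum_list (map (\<lambda>h. h v) hs) - (sum_list (map c hs)) *s v)"
    by (simp add: scale_left_distrib algebra_simps)
  also have "\<dots> \<in> S" using Cons by (intro subspace_add[OF S]) auto
  finally show ?case .
qed

definition commsum :: "('b \<Rightarrow> 'b) set \<Rightarrow> ('b \<Rightarrow> 'b) \<Rightarrow> ('b \<Rightarrow> 'b) \<Rightarrow> bool" where
  "commsum D f g \<longleftrightarrow> (\<exists>hs. set hs \<subseteq> D \<and> (\<forall>v. f (g v) - g (f v) = sum_list (map (\<lambda>h. h v) hs)))"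

lemma Lie_step:
  assumes W: "subspace W"
    and ops: "\<And>g. g \<in> C0 \<union> C1 \<Longrightarrow> lin g \<and> (\<forall>w\<in>W. g w \<in> W)"
    and idl: "\<And>f g. f \<in> C0 \<Longrightarrow> g \<in> C1 \<Longrightarrow> commsum C1 f g"
    and der: "\<And>f g. f \<in> C0 \<Longrightarrow> g \<in> C0 \<Longrightarrow> commsum C1 f g"
    and u0W: "u0 \<notin> W" and u0: "\<And>g. g \<in> C1 \<Longrightarrow> \<exists>c. g u0 - c *s u0 \<in> W"
  shows "\<exists>u. u \<notin> W \<and> (\<forall>g\<in>C0. \<exists>c. g u - c *s u \<in> W)"
proof -
  define lam where "lam g = (SOME c. g u0 - c *s u0 \<in> W)" for g
  have lam: "g u0 - lam g *s u0 \<in> W" if "g \<in> C1" for g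
    unfolding lam_def using u0[OF that] by (rule someI_ex)
  define U where "U = {v. \<forall>h\<in>C1. h v - lam h *s v \<in> W}"
  have lin: "lin g" and gW: "\<And>w. w \<in> W \<Longrightarrow> g w \<in> W" if "g \<in> C0 \<union> C1" for g
    using ops[OF that] by auto
  have lin0: "lin g" if "g \<in> C0" for g using ops that by blast
  have lin1: "lin g" if "g \<in> C1" for g using ops that by blast
  have WU: "W \<subseteq> U"
  proof
    fix w assume w: "w \<in> W"
    show "w \<in> U" unfolding U_def
      using subspace_diff[OF W gW[OF _ w] subspace_scale[OF W w]] by blast
  qed
  have u0U: "u0 \<in> U" unfolding U_def using lam by blast
  have Usub: "subspace U" unfolding subspace_def
  proof (intro conjI ballI allI)
    show "0 \<in> U" using WU subspace_0[OF W] by blast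
  next
    fix x y assume x: "x \<in> U" and y: "y \<in> U"
    show "x + y \<in> U" unfolding U_def
    proof (intro CollectI ballI)
      fix h assume h: "h \<in> C1"
      have "h (x + y) - lam h *s (x + y) = (h x - lam h *s x) + (h y - lam h *s y)"
        using lin[of h] h by (simp add: lin_add scale_right_distrib algebra_simps)
      then show "h (x + y) - lam h *s (x + y) \<in> W"
        using x y h subspace_add[OF W] unfolding U_def by auto
    qed
  next
    fix c x assume x: "x \<in> U"
    show "c *s x \<in> U" unfolding U_def
    proof (intro CollectI ballI)
      fix h assume h: "h \<in> C1"
      have "h (c *s x) - lam h *s (c *s x) = c *s (h x - lam h *s x)"
        using lin[of h] h by (simp add: lin_scale scale_right_diff_distrib scale_left_commute)
      then show "h (c *s x) - lam h *s (c *s x) \<in> W"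
        using x h subspace_scale[OF W] unfolding U_def by auto
    qed
  qed
  have TRI: "h ((f^^k) v) - lam h *s (f^^k) v \<in> Kry W f v k"
    if f: "f \<in> C0" and v: "v \<in> U" and h: "h \<in> C1" for f v h k
    using h
  proof (induction k arbitrary: h)
    case 0 then show ?case using v unfolding U_def by (simp add: Kry0)
  next
    case (Suc k)
    let ?e = "(f^^k) v"
    obtain hs where hs: "set hs \<subseteq> C1" "\<And>x. f (h x) - h (f x) = sum_list (map (\<lambda>h. h x) hs)"
      using idl[OF f Suc.prems] unfolding commsum_def by blast
    have y: "h ?e - lam h *s ?e \<in> Kry W f v k" using Suc by blast
    have fy: "f (h ?e - lam h *s ?e) \<in> Kry W f v (Suc k)"
      by (rule Kry_shift[OF W lin0[OF f]]) (use f gW y in auto)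
    have sl: "sum_list (map (\<lambda>h. h ?e) hs) - (sum_list (map lam hs)) *s ?e \<in> Kry W f v (Suc k)"
      by (rule sumlist_weight[OF Kry_sub[OF W]])
        (use Suc.IH hs(1) Kry_mono[of k "Suc k" W f v] in auto)
    have ev: "(sum_list (map lam hs)) *s ?e \<in> Kry W f v (Suc k)"
      using Kry_vec[of k "Suc k" W f v] W subspace_scale[OF Kry_sub[OF W]] by auto
    have "h ((f^^Suc k) v) - lam h *s (f^^Suc k) v
        = f (h ?e - lam h *s ?e) - ((sum_list (map (\<lambda>h. h ?e) hs) - (sum_list (map lam hs)) *s ?e)
           + (sum_list (map lam hs)) *s ?e)"
      using hs(2)[of ?e] lin[of f] f by (simp add: lin_diff lin_scale algebra_simps)
    also have "\<dots> \<in> Kry W f v (Suc k)"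
      using fy sl ev Kry_sub[OF W] by (meson subspace_add subspace_diff)
    finally show ?case .
  qed
  have INV: "f v \<in> U" if f: "f \<in> C0" and v: "v \<in> U" for f v
  proof (cases "v \<in> W")
    case True then show ?thesis using WU gW[OF _ True] f by blast
  next
    case False
    show ?thesis unfolding U_def
    proof (intro CollectI ballI)
      fix h assume h: "h \<in> C1"
      obtain hs where hs: "set hs \<subseteq> C1" "\<And>x. f (h x) - h (f x) = sum_list (map (\<lambda>h. h x) hs)"
        using idl[OF f h] unfolding commsum_def by blast
      obtain m where m0: "m > 0" and mY: "(f^^m) v \<in> Kry W f v m"
          and mmin: "\<forall>k<m. (f^^k) v \<notin> Kry W f v k"
        using Kry_min[OF W False] by blast
      have c0: "sum_list (map lam hs) = 0"
      proof (rule TFL[OF W lin1[OF h] lin0[OF f] _ _ m0 mY _ _])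
        show "h w \<in> W" if "w \<in> W" for w using gW h that by blast
        show "f w \<in> W" if "w \<in> W" for w using gW f that by blast
        show "(f ^^ (m - 1)) v \<notin> Kry W f v (m - 1)" using mmin m0 by simp
        show "h v - lam h *s v \<in> W" using v h unfolding U_def by blast
        show "f (h ((f ^^ k) v)) - h (f ((f ^^ k) v)) - sum_list (map lam hs) *s (f ^^ k) v
              \<in> Kry W f v k" for k
          unfolding hs(2)
          by (rule sumlist_weight[OF Kry_sub[OF W]]) (use TRI[OF f v] hs(1) in auto)
      qed
      have "sum_list (map (\<lambda>h. h v) hs) - (sum_list (map lam hs)) *s v \<in> W"
        by (rule sumlist_weight[OF W]) (use v hs(1) in \<open>auto simp: U_def\<close>)
      then have s: "sum_list (map (\<lambda>h. h v) hs) \<in> W" using c0 by simp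
      have hv: "h v - lam h *s v \<in> W" using v h unfolding U_def by blast
      have "h (f v) - lam h *s f v = f (h v - lam h *s v) - sum_list (map (\<lambda>h. h v) hs)"
        using hs(2)[of v] lin[of f] f by (simp add: lin_diff lin_scale algebra_simps)
      also have "\<dots> \<in> W" using subspace_diff[OF W gW[OF _ hv] s] f by blast
      finally show "h (f v) - lam h *s f v \<in> W" .
    qed
  qed
  have CE: "\<exists>u\<in>E. u \<notin> W \<and> (\<forall>g\<in>C0. \<exists>c. g u - c *s u \<in> W)"
    if "subspace E" "W \<subseteq> E" "E \<subseteq> U" "x \<in> E" "x \<notin> W"
       "\<And>f y. f \<in> C0 \<Longrightarrow> y \<in> E \<Longrightarrow> f y \<in> E" for E x
    using that
  proof (induction "dim E" arbitrary: E x rule: less_induct)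
    case (less E x)
    show ?case
    proof (cases "\<forall>f\<in>C0. \<exists>\<alpha>. \<forall>y\<in>E. f y - \<alpha> *s y \<in> W")
      case True then show ?thesis using less.prems(4,5) by blast
    next
      case False
      then obtain f where f: "f \<in> C0" and nsc: "\<And>\<alpha>. \<exists>y\<in>E. f y - \<alpha> *s y \<notin> W" by blast
      obtain \<alpha> v0 where v0E: "v0 \<in> E" and v0W: "v0 \<notin> W" and v0: "f v0 - \<alpha> *s v0 \<in> W"
        using EIG[OF W less.prems(1,2,4,5) lin0[OF f] less.prems(6)[OF f]] gW f by blast
      define E' where "E' = {y\<in>E. f y - \<alpha> *s y \<in> W}"
      have E'sub: "subspace E'" unfolding subspace_def E'_def
      proof (intro conjI ballI allI)
        show "0 \<in> {y \<in> E. f y - \<alpha> *s y \<in> W}"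
          using subspace_0[OF less.prems(1)] subspace_0[OF W] lin_0[OF lin[of f]] f by simp
      next
        fix x y assume "x \<in> {y \<in> E. f y - \<alpha> *s y \<in> W}" "y \<in> {y \<in> E. f y - \<alpha> *s y \<in> W}"
        moreover have "f (x + y) - \<alpha> *s (x + y) = (f x - \<alpha> *s x) + (f y - \<alpha> *s y)"
          using lin[of f] f by (simp add: lin_add scale_right_distrib algebra_simps)
        ultimately show "x + y \<in> {y \<in> E. f y - \<alpha> *s y \<in> W}"
          using subspace_add[OF W] subspace_add[OF less.prems(1)] by auto
      next
        fix c x assume "x \<in> {y \<in> E. f y - \<alpha> *s y \<in> W}"
        moreover have "f (c *s x) - \<alpha> *s (c *s x) = c *s (f x - \<alpha> *s x)"
          using lin[of f] f by (simp add: lin_scale scale_right_diff_distrib scale_left_commute)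
        ultimately show "c *s x \<in> {y \<in> E. f y - \<alpha> *s y \<in> W}"
          using subspace_scale[OF W] subspace_scale[OF less.prems(1)] by auto
      qed
      have WE': "W \<subseteq> E'" unfolding E'_def
      proof
        fix w assume w: "w \<in> W"
        show "w \<in> {y \<in> E. f y - \<alpha> *s y \<in> W}"
          using w less.prems(2) subspace_diff[OF W gW[OF _ w] subspace_scale[OF W w]] f by blast
      qed
      have E'E: "E' \<subseteq> E" unfolding E'_def by blast
      have E'ne: "E' \<noteq> E" using nsc[of \<alpha>] unfolding E'_def by blast
      have E'inv: "f' y \<in> E'" if f': "f' \<in> C0" and y: "y \<in> E'" for f' y
      proof -
        obtain hs where hs: "set hs \<subseteq> C1" "\<And>x. f (f' x) - f' (f x) = sum_list (map (\<lambda>h. h x) hs)"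
          using der[OF f f'] unfolding commsum_def by blast
        have fE: "\<And>z. z \<in> E \<Longrightarrow> f' z \<in> E" using less.prems(6)[OF f'] .
        have kap: "sum_list (map lam hs) = 0"
        proof -
          obtain m where m0: "m > 0" and mY: "(f'^^m) v0 \<in> Kry W f' v0 m"
            and mmin: "\<forall>k<m. (f'^^k) v0 \<notin> Kry W f' v0 k"
            using Kry_min[OF W v0W] by blast
          have "- sum_list (map lam hs) = 0"
          proof (rule TFL[OF W lin0[OF f] lin0[OF f'] _ _ m0 mY _ v0])
            show "f w \<in> W" if "w \<in> W" for w using gW f that by blast
            show "f' w \<in> W" if "w \<in> W" for w using gW f' that by blast
            show "(f' ^^ (m - 1)) v0 \<notin> Kry W f' v0 (m - 1)" using mmin m0 by simp
            show "f' (f ((f' ^^ k) v0)) - f (f' ((f' ^^ k) v0)) - (- sum_list (map lam hs)) *s (f' ^^ k) v0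
              \<in> Kry W f' v0 k" for k
            proof -
              have "(f'^^k) v0 \<in> E" by (rule pow_pres[of E f']) (use fE v0E in auto)
              then have ek: "(f'^^k) v0 \<in> U" using less.prems(3) by blast
              have "sum_list (map (\<lambda>h. h ((f'^^k) v0)) hs) - (sum_list (map lam hs)) *s (f'^^k) v0 \<in> W"
                by (rule sumlist_weight[OF W]) (use ek hs(1) in \<open>auto simp: U_def\<close>)
              then have "- (sum_list (map (\<lambda>h. h ((f'^^k) v0)) hs) - (sum_list (map lam hs)) *s (f'^^k) v0) \<in> W"
                by (rule subspace_neg[OF W])
              moreover have "f' (f ((f' ^^ k) v0)) - f (f' ((f' ^^ k) v0)) - (- sum_list (map lam hs)) *s (f' ^^ k) v0
                  = - (sum_list (map (\<lambda>h. h ((f'^^k) v0)) hs) - (sum_list (map lam hs)) *s (f'^^k) v0)"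
                using hs(2)[of "(f'^^k) v0"] by (simp add: algebra_simps)
              ultimately show ?thesis using KryW by simp
            qed
          qed
          then show ?thesis by simp
        qed
        have yE: "y \<in> E" and yW: "f y - \<alpha> *s y \<in> W" using y unfolding E'_def by auto
        have yU: "y \<in> U" using yE less.prems(3) by blast
        have "sum_list (map (\<lambda>h. h y) hs) - (sum_list (map lam hs)) *s y \<in> W"
          by (rule sumlist_weight[OF W]) (use yU hs(1) in \<open>auto simp: U_def\<close>)
        then have s: "sum_list (map (\<lambda>h. h y) hs) \<in> W" using kap by simp
        have "f (f' y) - \<alpha> *s f' y = f' (f y - \<alpha> *s y) + sum_list (map (\<lambda>h. h y) hs)"
          using hs(2)[of y] lin[of f'] f' by (simp add: lin_diff lin_scale algebra_simps)
        also have "\<dots> \<in> W" using subspace_add[OF W gW[OF _ yW] s] f' by blast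
        finally show ?thesis unfolding E'_def using fE[OF yE] by blast
      qed
      have "dim E' < dim E"
      proof (rule dim_psubset)
        have s1: "span E' = E'" using E'sub by simp
        have s2: "span E = E" using less.prems(1) by simp
        show "span E' \<subset> span E" unfolding s1 s2 using E'E E'ne by blast
      qed
      moreover have "v0 \<in> E'" unfolding E'_def using v0E v0 by blast
      moreover have "E' \<subseteq> U" using E'E less.prems(3) by blast
      ultimately have "\<exists>u\<in>E'. u \<notin> W \<and> (\<forall>g\<in>C0. \<exists>c. g u - c *s u \<in> W)"
        by (intro less.hyps[of E' v0]) (use E'sub WE' v0W E'inv in auto)
      then obtain u where "u \<in> E'" "u \<notin> W" "\<forall>g\<in>C0. \<exists>c. g u - c *s u \<in> W" by blast
      then show ?thesis using E'E by blast
    qed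
  qed
  have "\<exists>u\<in>U. u \<notin> W \<and> (\<forall>g\<in>C0. \<exists>c. g u - c *s u \<in> W)"
    by (rule CE[of U u0]) (use Usub WU u0U u0W INV in auto)
  then show ?thesis by blast
qed

lemma Lie:
  assumes W: "subspace W" and WU: "W \<noteq> UNIV"
    and ops: "\<And>t g. g \<in> C t \<Longrightarrow> lin g \<and> (\<forall>w\<in>W. g w \<in> W)"
    and top: "\<And>g v. g \<in> C T \<Longrightarrow> g v \<in> W"
    and idl: "\<And>t f g. t < T \<Longrightarrow> f \<in> C t \<Longrightarrow> g \<in> C (Suc t) \<Longrightarrow> commsum (C (Suc t)) f g"
    and der: "\<And>t f g. t < T \<Longrightarrow> f \<in> C t \<Longrightarrow> g \<in> C t \<Longrightarrow> commsum (C (Suc t)) f g"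
  shows "\<exists>u. u \<notin> W \<and> (\<forall>g\<in>C 0. \<exists>c. g u - c *s u \<in> W)"
proof -
  have "\<exists>u. u \<notin> W \<and> (\<forall>g\<in>C (T - d). \<exists>c. g u - c *s u \<in> W)" if "d \<le> T" for d
    using that
  proof (induction d)
    case 0
    obtain u where "u \<notin> W" using WU by blast
    then show ?case using top by (intro exI[of _ u]) (auto intro!: exI[of _ 0])
  next
    case (Suc d)
    then obtain u0 where u0W: "u0 \<notin> W" and u0: "\<forall>g\<in>C (T - d). \<exists>c. g u0 - c *s u0 \<in> W" by auto
    have eq: "T - d = Suc (T - Suc d)" using Suc.prems by simp
    have lt: "T - Suc d < T" using Suc.prems by simp
    show ?case
      by (rule Lie_step[OF W _ idl[OF lt] der[OF lt] u0W])
        (use ops u0 eq in auto)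
  qed
  from this[of T] show ?thesis by simp
qed

end


section \<open>Generic skew-symmetric list functions\<close>

lemma two_zero_field: "(c::'k::field_char_0) + c = 0 \<Longrightarrow> c = 0"
  by simp

lemma gl_rep0:
  fixes G :: "'a list \<Rightarrow> 'c::ab_group_add"
  assumes sk: "\<And>zs i. length zs = N \<Longrightarrow> Suc i < N \<Longrightarrow> G (zs[i := zs!Suc i, Suc i := zs!i]) = - G zs"
    and two: "\<And>c::'c. c + c = 0 \<Longrightarrow> c = 0"
  shows "length zs = N \<Longrightarrow> i < j \<Longrightarrow> j < N \<Longrightarrow> zs!i = zs!j \<Longrightarrow> G zs = 0"
proof (induction "j - i" arbitrary: zs j)
  case 0 then show ?case by simp
next
  case (Suc d)
  show ?case
  proof (cases d)
    case 0
    then have j: "j = Suc i" using Suc.hyps(2) Suc.prems(2) by simp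
    have "zs[i := zs!Suc i, Suc i := zs!i] = zs" using Suc.prems j by (metis list_update_id)
    then have "G zs = - G zs" using sk[of zs i] Suc.prems j by simp
    then have "G zs + G zs = 0" by (simp add: eq_neg_iff_add_eq_0)
    then show ?thesis by (rule two)
  next
    case (Suc d')
    define zs' where "zs' = zs[j - 1 := zs!j, j := zs!(j-1)]"
    have j1: "Suc (j - 1) = j" using Suc.prems by simp
    have G: "G zs' = - G zs" unfolding zs'_def using sk[of zs "j-1"] Suc.prems j1 by simp
    have "G zs' = 0"
    proof (rule Suc.hyps)
      show "d = (j - 1) - i" using Suc.hyps(2) by simp
      show "length zs' = N" using Suc.prems by (simp add: zs'_def)
      show "i < j - 1" using Suc.hyps(2) \<open>d = Suc d'\<close> by simp
      show "j - 1 < N" using Suc.prems by simp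
      show "zs' ! i = zs' ! (j - 1)"
        using Suc.prems Suc.hyps(2) \<open>d = Suc d'\<close> by (simp add: zs'_def nth_list_update)
    qed
    then show ?thesis using G by simp
  qed
qed

lemma gl_swap:
  fixes G :: "'a::ab_group_add list \<Rightarrow> 'c::ab_group_add"
  assumes sk: "\<And>zs i. length zs = N \<Longrightarrow> Suc i < N \<Longrightarrow> G (zs[i := zs!Suc i, Suc i := zs!i]) = - G zs"
    and two: "\<And>c::'c. c + c = 0 \<Longrightarrow> c = 0"
    and add: "\<And>zs i x y. length zs = N \<Longrightarrow> i < N \<Longrightarrow> G (zs[i := x + y]) = G (zs[i := x]) + G (zs[i := y])"
    and len: "length zs = N" and ij: "i < N" "j < N" "i \<noteq> j"
  shows "G (zs[i := zs!j, j := zs!i]) = - G zs"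
proof -
  have r0: "G zs' = 0" if "length zs' = N" "i' < N" "j' < N" "i' \<noteq> j'" "zs'!i' = zs'!j'" for zs' i' j'
  proof (cases "i' < j'")
    case True then show ?thesis using gl_rep0[OF sk two] that by blast
  next
    case False then have "j' < i'" using that by simp
    then show ?thesis using gl_rep0[OF sk two, where zs=zs' and i=j' and j=i'] that by simp
  qed
  define H where "H a b = G (zs[i := a, j := b])" for a b
  have Hadd1: "H (x + y) b = H x b + H y b" for x y b
  proof -
    have "zs[i := c, j := b] = (zs[j := b])[i := c]" for c using ij by (simp add: list_update_swap)
    then show ?thesis unfolding H_def using add[of "zs[j := b]" i x y] len ij by simp
  qed
  have Hadd2: "H a (x + y) = H a x + H a y" for x y a
    unfolding H_def using add[of "zs[i := a]" j x y] len ij by simp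
  have Hc: "H c c = 0" for c
    unfolding H_def by (rule r0[of _ i j]) (use len ij in \<open>auto simp: nth_list_update\<close>)
  have "H (zs!i + zs!j) (zs!i + zs!j) = H (zs!i) (zs!i) + H (zs!i) (zs!j) + (H (zs!j) (zs!i) + H (zs!j) (zs!j))"
    by (simp add: Hadd1 Hadd2)
  then have "H (zs!i) (zs!j) + H (zs!j) (zs!i) = 0" by (simp add: Hc)
  moreover have "H (zs!i) (zs!j) = G zs" unfolding H_def by simp
  moreover have "H (zs!j) (zs!i) = G (zs[i := zs!j, j := zs!i])" unfolding H_def ..
  ultimately show ?thesis by (simp add: eq_neg_iff_add_eq_0 add.commute)
qed

lemma snoc_nth: "length ys = Suc k \<Longrightarrow> take k ys @ [ys!k] = ys"
  by (metis lessI take_Suc_conv_app_nth take_all order.refl)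

definition combhyp :: "nat \<Rightarrow> ('a::ab_group_add list \<Rightarrow> 'a list \<Rightarrow> 'k::field_char_0) \<Rightarrow> bool" where
  "combhyp m F \<longleftrightarrow>
    (\<forall>zs xs i x y. length zs = Suc (Suc m) \<longrightarrow> length xs = m \<longrightarrow> i < Suc (Suc m) \<longrightarrow>
        F (zs[i := x + y]) xs = F (zs[i := x]) xs + F (zs[i := y]) xs) \<and>
    (\<forall>zs xs i x y. length zs = Suc (Suc m) \<longrightarrow> length xs = m \<longrightarrow> i < m \<longrightarrow>
        F zs (xs[i := x + y]) = F zs (xs[i := x]) + F zs (xs[i := y])) \<and>
    (\<forall>zs xs i. length zs = Suc (Suc m) \<longrightarrow> length xs = m \<longrightarrow> Suc i < Suc (Suc m) \<longrightarrow>
        F (zs[i := zs!Suc i, Suc i := zs!i]) xs = - F zs xs) \<and>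
    (\<forall>zs xs i. length zs = Suc (Suc m) \<longrightarrow> length xs = m \<longrightarrow> Suc i < m \<longrightarrow>
        F zs (xs[i := xs!Suc i, Suc i := xs!i]) = - F zs xs) \<and>
    (\<forall>Z y xs. length Z = Suc m \<longrightarrow> length xs = m \<longrightarrow>
        F (Z @ [y]) xs = (\<Sum>j<m. F (Z @ [xs!j]) (xs[j := y])))"

lemma comb:
  fixes F :: "'a::ab_group_add list \<Rightarrow> 'a list \<Rightarrow> 'k::field_char_0"
  shows "combhyp m F \<Longrightarrow> length zs = Suc (Suc m) \<Longrightarrow> length xs = m \<Longrightarrow> F zs xs = 0"
proof (induction m arbitrary: F zs xs)
  case 0
  have rel: "F (Z @ [y]) [] = 0" if "length Z = 1" for Z y
    using 0(1) that unfolding combhyp_def by simp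
  have "zs = butlast zs @ [last zs]" using 0(2) by (metis append_butlast_last_id list.size(3) nat.distinct(1))
  then show ?case using rel[of "butlast zs" "last zs"] 0 by simp
next
  case (Suc m)
  note H = Suc.prems(1)[unfolded combhyp_def]
  have addZ: "\<And>zs xs i x y. length zs = Suc (Suc (Suc m)) \<Longrightarrow> length xs = Suc m \<Longrightarrow> i < Suc (Suc (Suc m)) \<Longrightarrow>
        F (zs[i := x + y]) xs = F (zs[i := x]) xs + F (zs[i := y]) xs" using H by blast
  have addX: "\<And>zs xs i x y. length zs = Suc (Suc (Suc m)) \<Longrightarrow> length xs = Suc m \<Longrightarrow> i < Suc m \<Longrightarrow>
        F zs (xs[i := x + y]) = F zs (xs[i := x]) + F zs (xs[i := y])" using H by blast
  have skZ: "\<And>zs xs i. length zs = Suc (Suc (Suc m)) \<Longrightarrow> length xs = Suc m \<Longrightarrow> Suc i < Suc (Suc (Suc m)) \<Longrightarrow>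
        F (zs[i := zs!Suc i, Suc i := zs!i]) xs = - F zs xs" using H by blast
  have skX: "\<And>zs xs i. length zs = Suc (Suc (Suc m)) \<Longrightarrow> length xs = Suc m \<Longrightarrow> Suc i < Suc m \<Longrightarrow>
        F zs (xs[i := xs!Suc i, Suc i := xs!i]) = - F zs xs" using H by blast
  have rel: "\<And>Z y xs. length Z = Suc (Suc m) \<Longrightarrow> length xs = Suc m \<Longrightarrow>
        F (Z @ [y]) xs = (\<Sum>j<Suc m. F (Z @ [xs!j]) (xs[j := y]))" using H by blast
  have two: "\<And>c::'k. c + c = 0 \<Longrightarrow> c = 0" by simp
  have adj0: "F (Z @ [a, a]) xs = 0" if "length Z = Suc m" "length xs = Suc m" for Z a xs
  proof -
    let ?zs = "Z @ [a, a]"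
    have "?zs[Suc m := ?zs ! Suc (Suc m), Suc (Suc m) := ?zs ! Suc m] = ?zs"
      using that by (simp add: nth_append list_update_append)
    then have "F ?zs xs = - F ?zs xs" using skZ[of ?zs xs "Suc m"] that by simp
    then have "F ?zs xs + F ?zs xs = 0" by (simp add: eq_neg_iff_add_eq_0)
    then show ?thesis by (rule two)
  qed
  have swZ: "F (Z @ [a, b]) xs = - F (Z @ [b, a]) xs" if "length Z = Suc m" "length xs = Suc m" for Z a b xs
  proof -
    let ?zs = "Z @ [b, a]"
    have "?zs[Suc m := ?zs ! Suc (Suc m), Suc (Suc m) := ?zs ! Suc m] = Z @ [a, b]"
      using that by (simp add: nth_append list_update_append)
    then show ?thesis using skZ[of ?zs xs "Suc m"] that by simp
  qed
  \<comment> \<open>the contracted function satisfies the hypotheses for m\<close>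
  have vanish: "F (zs' @ [w]) (xs' @ [w]) = 0" if "length zs' = Suc (Suc m)" "length xs' = m" for zs' xs' w
  proof -
    define F' where "F' zs xs = F (zs @ [w]) (xs @ [w])" for zs xs :: "'a list"
    have "combhyp m F'" unfolding combhyp_def
    proof (intro conjI allI impI)
      fix zs xs :: "'a list" and i :: nat and x y :: 'a assume a: "length zs = Suc (Suc m)" "length xs = m" "i < Suc (Suc m)"
      then show "F' (zs[i := x + y]) xs = F' (zs[i := x]) xs + F' (zs[i := y]) xs"
        unfolding F'_def using addZ[of "zs @ [w]" "xs @ [w]" i x y] by (simp add: list_update_append)
    next
      fix zs xs :: "'a list" and i :: nat and x y :: 'a assume a: "length zs = Suc (Suc m)" "length xs = m" "i < m"
      then show "F' zs (xs[i := x + y]) = F' zs (xs[i := x]) + F' zs (xs[i := y])"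
        unfolding F'_def using addX[of "zs @ [w]" "xs @ [w]" i x y] by (simp add: list_update_append)
    next
      fix zs xs :: "'a list" and i :: nat assume a: "length zs = Suc (Suc m)" "length xs = m" "Suc i < Suc (Suc m)"
      have "(zs @ [w])[i := (zs @ [w]) ! Suc i, Suc i := (zs @ [w]) ! i] = zs[i := zs ! Suc i, Suc i := zs ! i] @ [w]"
        using a by (simp add: list_update_append nth_append)
      then show "F' (zs[i := zs ! Suc i, Suc i := zs ! i]) xs = - F' zs xs"
        unfolding F'_def using skZ[of "zs @ [w]" "xs @ [w]" i] a by simp
    next
      fix zs xs :: "'a list" and i :: nat assume a: "length zs = Suc (Suc m)" "length xs = m" "Suc i < m"
      have "(xs @ [w])[i := (xs @ [w]) ! Suc i, Suc i := (xs @ [w]) ! i] = xs[i := xs ! Suc i, Suc i := xs ! i] @ [w]"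
        using a by (simp add: list_update_append nth_append)
      then show "F' zs (xs[i := xs ! Suc i, Suc i := xs ! i]) = - F' zs xs"
        unfolding F'_def using skX[of "zs @ [w]" "xs @ [w]" i] a by simp
    next
      fix Z xs :: "'a list" and y :: 'a assume a: "length Z = Suc m" "length xs = m"
      have s1: "F (Z @ [y, w]) (xs @ [w]) = - F (Z @ [w, y]) (xs @ [w])"
        using swZ[of Z "xs @ [w]" y w] a by simp
      have s2: "F ((Z @ [w]) @ [y]) (xs @ [w]) = (\<Sum>j<Suc m. F ((Z @ [w]) @ [(xs @ [w])!j]) ((xs @ [w])[j := y]))"
        using rel[of "Z @ [w]" "xs @ [w]" y] a by simp
      have s3: "(\<Sum>j<Suc m. F ((Z @ [w]) @ [(xs @ [w])!j]) ((xs @ [w])[j := y]))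
          = (\<Sum>j<m. - F (Z @ [xs!j, w]) (xs[j := y] @ [w]))"
      proof -
        have "(\<Sum>j<Suc m. F ((Z @ [w]) @ [(xs @ [w])!j]) ((xs @ [w])[j := y]))
            = (\<Sum>j<m. F ((Z @ [w]) @ [(xs @ [w])!j]) ((xs @ [w])[j := y])) + F (Z @ [w, w]) (xs @ [y])"
          using a by (simp add: list_update_append nth_append)
        also have "F (Z @ [w, w]) (xs @ [y]) = 0" using adj0 a by simp
        also have "(\<Sum>j<m. F ((Z @ [w]) @ [(xs @ [w])!j]) ((xs @ [w])[j := y]))
            = (\<Sum>j<m. - F (Z @ [xs!j, w]) (xs[j := y] @ [w]))"
        proof (rule sum.cong)
          fix j assume "j \<in> {..<m}"
          then have j: "j < m" by simp
          have "F ((Z @ [w]) @ [(xs @ [w])!j]) ((xs @ [w])[j := y]) = F (Z @ [w, xs!j]) (xs[j := y] @ [w])"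
            using a j by (simp add: list_update_append nth_append)
          also have "\<dots> = - F (Z @ [xs!j, w]) (xs[j := y] @ [w])" using swZ[of Z "xs[j := y] @ [w]" w "xs!j"] a by simp
          finally show "F ((Z @ [w]) @ [(xs @ [w])!j]) ((xs @ [w])[j := y]) = - F (Z @ [xs!j, w]) (xs[j := y] @ [w])" .
        qed simp
        finally show ?thesis by simp
      qed
      have "F' (Z @ [y]) xs = F (Z @ [y, w]) (xs @ [w])" unfolding F'_def by simp
      also have "\<dots> = - (\<Sum>j<m. - F (Z @ [xs!j, w]) (xs[j := y] @ [w]))" using s1 s2 s3 by simp
      also have "\<dots> = (\<Sum>j<m. F' (Z @ [xs!j]) (xs[j := y]))" unfolding F'_def by (simp add: sum_negf)
      finally show "F' (Z @ [y]) xs = (\<Sum>j<m. F' (Z @ [xs ! j]) (xs[j := y]))" .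
    qed
    then have "F' zs' xs' = 0" using Suc.IH that by blast
    then show ?thesis unfolding F'_def .
  qed
  have stepA: "F (Z @ [a]) ys = 0" if "length Z = Suc (Suc m)" "length ys = Suc m" "j < Suc m" "ys!j = a" for Z ys j a
  proof (cases "j = m")
    case True
    have "F (Z @ [a]) (take m ys @ [ys!m]) = 0" using vanish[of Z "take m ys" "ys!m"] that True by simp
    then show ?thesis using snoc_nth[of ys m] that by simp
  next
    case False
    let ?G = "\<lambda>xs. F (Z @ [a]) xs"
    have sw: "?G (ys[j := ys!m, m := ys!j]) = - ?G ys"
    proof (rule gl_swap[where N = "Suc m"])
      show "?G (xs[i := xs ! Suc i, Suc i := xs ! i]) = - ?G xs" if "length xs = Suc m" "Suc i < Suc m" for xs i
        using skX[of "Z @ [a]" xs i] that \<open>length Z = Suc (Suc m)\<close> by simp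
      show "c + c = 0 \<Longrightarrow> c = 0" for c :: 'k by simp
      show "?G (xs[i := x + y]) = ?G (xs[i := x]) + ?G (xs[i := y])" if "length xs = Suc m" "i < Suc m" for xs i x y
        using addX[of "Z @ [a]" xs i x y] that \<open>length Z = Suc (Suc m)\<close> by simp
    qed (use that False in auto)
    let ?ys = "ys[j := ys!m, m := ys!j]"
    have ly: "length ?ys = Suc m" using that by simp
    have ym: "?ys ! m = a" using that by simp
    have "?G (take m ?ys @ [?ys!m]) = 0" using vanish[of Z "take m ?ys" "?ys!m"] that ym by simp
    then have "?G ?ys = 0" using snoc_nth[OF ly] by simp
    then show ?thesis using sw by simp
  qed
  define Z where "Z = take (Suc (Suc m)) zs"
  define y where "y = zs ! Suc (Suc m)"
  have zs: "zs = Z @ [y]" unfolding Z_def y_def using snoc_nth[of zs "Suc (Suc m)"] Suc.prems(2) by simp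
  have lZ: "length Z = Suc (Suc m)" unfolding Z_def using Suc.prems(2) by simp
  have lx: "length xs = Suc m" using Suc.prems(3) .
  \<comment> \<open>polarisation\<close>
  have stepB: "F (Z @ [a]) (xs[j := b]) = - F (Z @ [b]) (xs[j := a])" if j: "j < Suc m" for a b j
  proof -
    define Hf where "Hf p q = F (Z @ [p]) (xs[j := q])" for p q
    have H1: "Hf (p + p') q = Hf p q + Hf p' q" for p p' q
    proof -
      have e: "(Z @ [y])[Suc (Suc m) := c] = Z @ [c]" for c using lZ by (simp add: list_update_append)
      show ?thesis unfolding Hf_def using addZ[of "Z @ [y]" "xs[j := q]" "Suc (Suc m)" p p'] lZ lx by (simp only: e) simp
    qed
    have H2: "Hf p (q + q') = Hf p q + Hf p q'" for p q q'
      unfolding Hf_def using addX[of "Z @ [p]" xs j q q'] lZ lx j by simp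
    have H0: "Hf c c = 0" for c
      unfolding Hf_def by (rule stepA[of _ _ j]) (use lZ lx j in auto)
    have "Hf (a + b) (a + b) = Hf a a + Hf a b + (Hf b a + Hf b b)" by (simp add: H1 H2)
    then have "Hf a b + Hf b a = 0" by (simp add: H0)
    then show ?thesis unfolding Hf_def by (simp add: eq_neg_iff_add_eq_0)
  qed
  have "F (Z @ [y]) xs = (\<Sum>j<Suc m. F (Z @ [xs!j]) (xs[j := y]))" by (rule rel[OF lZ lx])
  also have "\<dots> = (\<Sum>j<Suc m. - F (Z @ [y]) xs)"
  proof (rule sum.cong)
    fix j assume "j \<in> {..<Suc m}"
    then have j: "j < Suc m" by simp
    have "F (Z @ [xs!j]) (xs[j := y]) = - F (Z @ [y]) (xs[j := xs!j])" by (rule stepB[OF j])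
    then show "F (Z @ [xs!j]) (xs[j := y]) = - F (Z @ [y]) xs" by simp
  qed simp
  also have "\<dots> = - (of_nat (Suc m) * F (Z @ [y]) xs)" by simp
  finally have "(1 + of_nat (Suc m)) * F (Z @ [y]) xs = 0" by (simp add: algebra_simps)
  moreover have "(1 + of_nat (Suc m) :: 'k) \<noteq> 0"
    by (metis of_nat_Suc of_nat_eq_0_iff nat.distinct(1) add.commute)
  ultimately show ?case using zs by simp
qed


lemma adj_split: "Suc i < length zs \<Longrightarrow> zs = take i zs @ zs!i # zs!Suc i # drop (Suc (Suc i)) zs"
  by (metis Cons_nth_drop_Suc Suc_lessD append_take_drop_id)

lemma adj_swap_split: "Suc i < length zs \<Longrightarrow>
   zs[i := zs!Suc i, Suc i := zs!i] = take i zs @ zs!Suc i # zs!i # drop (Suc (Suc i)) zs"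
proof -
  assume a: "Suc i < length zs"
  define xs where "xs = take i zs"
  define r where "r = drop (Suc (Suc i)) zs"
  have z: "zs = xs @ zs!i # zs!Suc i # r" unfolding xs_def r_def by (rule adj_split[OF a])
  have l: "length xs = i" unfolding xs_def using a by simp
  have "(xs @ zs!i # zs!Suc i # r)[i := zs!Suc i, Suc i := zs!i] = xs @ zs!Suc i # zs!i # r"
    using l by (simp add: list_update_append)
  then show ?thesis using z unfolding xs_def r_def by simp
qed

locale pna = fdv scl Basis
  for scl :: "'k::{alg_closed_field,field_char_0} \<Rightarrow> 'v::ab_group_add \<Rightarrow> 'v" and Basis +
  fixes n :: nat and br :: "'v list \<Rightarrow> 'v" and mul :: "'v \<Rightarrow> 'v \<Rightarrow> 'v"
  assumes n2: "2 \<le> n" and PN: "poisson_nlie scl n br mul"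
begin

notation scl (infixr "*s" 75)

lemmas PNs = PN[unfolded poisson_nlie_def]

lemma mul_lin: "mul (a *s x + y) z = a *s mul x z + mul y z"
  using PNs[THEN conjunct2, THEN conjunct1] by blast
lemma mul_comm: "mul x y = mul y x"
  using PNs[THEN conjunct2, THEN conjunct2, THEN conjunct1] by blast
lemma mul_assoc: "mul (mul x y) z = mul x (mul y z)"
  using PNs[THEN conjunct2, THEN conjunct2, THEN conjunct2, THEN conjunct1] by blast
lemma br_lin: "length xs + length ys + 1 = n \<Longrightarrow>
    br (xs @ (a *s x + y) # ys) = a *s br (xs @ x # ys) + br (xs @ y # ys)"
  using PNs[THEN conjunct2, THEN conjunct2, THEN conjunct2, THEN conjunct2, THEN conjunct1] by blast
lemma br_skew: "length xs + length ys + 2 = n \<Longrightarrow> br (xs @ x # y # ys) = - br (xs @ y # x # ys)"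
  using PNs[THEN conjunct2, THEN conjunct2, THEN conjunct2, THEN conjunct2, THEN conjunct2, THEN conjunct1] by blast
lemma FI: "length xs + 1 = n \<Longrightarrow> length ys = n \<Longrightarrow>
    br (xs @ [br ys]) = (\<Sum>i<n. br (ys[i := br (xs @ [ys ! i])]))"
  using PNs[THEN conjunct2, THEN conjunct2, THEN conjunct2, THEN conjunct2, THEN conjunct2, THEN conjunct2, THEN conjunct1] by blast
lemma Leib: "length xs + 1 = n \<Longrightarrow> br (mul y z # xs) = mul y (br (z # xs)) + mul z (br (y # xs))"
  using PNs[THEN conjunct2, THEN conjunct2, THEN conjunct2, THEN conjunct2, THEN conjunct2, THEN conjunct2, THEN conjunct2] by blast

lemma two_v: "(c::'v) + c = 0 \<Longrightarrow> c = 0"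
proof -
  assume a: "c + c = 0"
  have "(2::'k) *s c = c + c" by (metis one_add_one scale_left_distrib scale_one)
  then have "(2::'k) *s c = 0" using a by simp
  moreover have "(2::'k) \<noteq> 0" by simp
  ultimately show "c = 0" using scale_eq_0_iff by blast
qed

lemma mul_add_l: "mul (x + y) z = mul x z + mul y z"
  using mul_lin[of 1 x y z] by simp
lemma mul_0_l: "mul 0 z = 0"
  using mul_add_l[of 0 0 z] by simp
lemma mul_scale_l: "mul (a *s x) z = a *s mul x z"
  using mul_lin[of a x 0 z] by (simp add: mul_0_l)
lemma mul_add_r: "mul z (x + y) = mul z x + mul z y"
  by (simp only: mul_comm[of z] mul_add_l)
lemma mul_0_r: "mul z 0 = 0"
  by (simp only: mul_comm[of z] mul_0_l)
lemma mul_scale_r: "mul z (a *s x) = a *s mul z x"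
  by (simp only: mul_comm[of z] mul_scale_l)
lemma mul_neg_l: "mul (- x) z = - mul x z"
proof -
  have "mul x z + mul (- x) z = 0" using mul_add_l[of x "- x" z] mul_0_l by simp
  then show ?thesis by (simp add: minus_unique)
qed
lemma mul_neg_r: "mul z (- x) = - mul z x"
  by (simp only: mul_comm[of z] mul_neg_l)
lemma mul_diff_l: "mul (x - y) z = mul x z - mul y z"
  by (simp only: diff_conv_add_uminus mul_add_l mul_neg_l)
lemma mul_diff_r: "mul z (x - y) = mul z x - mul z y"
  by (simp only: diff_conv_add_uminus mul_add_r mul_neg_r)

lemma br_add: "length zs = n \<Longrightarrow> i < n \<Longrightarrow> br (zs[i := x + y]) = br (zs[i := x]) + br (zs[i := y])"
  using br_lin[of "take i zs" "drop (Suc i) zs" 1 x y] by (simp add: upd_conv_take_nth_drop)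
lemma br_0: "length zs = n \<Longrightarrow> i < n \<Longrightarrow> br (zs[i := 0]) = 0"
  using br_add[of zs i 0 0] by simp
lemma br_scale: "length zs = n \<Longrightarrow> i < n \<Longrightarrow> br (zs[i := a *s x]) = a *s br (zs[i := x])"
  using br_lin[of "take i zs" "drop (Suc i) zs" a x 0] br_0[of zs i] by (simp add: upd_conv_take_nth_drop)
lemma br_neg: "length zs = n \<Longrightarrow> i < n \<Longrightarrow> br (zs[i := - x]) = - br (zs[i := x])"
proof -
  assume a: "length zs = n" "i < n"
  have "br (zs[i := x]) + br (zs[i := - x]) = 0" using br_add[of zs i x "- x"] br_0[of zs i] a by simp
  then show ?thesis by (simp add: minus_unique)
qed
lemma br_diff: "length zs = n \<Longrightarrow> i < n \<Longrightarrow> br (zs[i := x - y]) = br (zs[i := x]) - br (zs[i := y])"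
  using br_add[of zs i x "- y"] br_neg[of zs i y] by simp
lemma br_zero: "length zs = n \<Longrightarrow> i < n \<Longrightarrow> zs!i = 0 \<Longrightarrow> br zs = 0"
proof -
  assume a: "length zs = n" "i < n" "zs!i = 0"
  have "zs[i := 0] = zs" using a(3) by (metis list_update_id)
  then show ?thesis using br_0[OF a(1,2)] by simp
qed
lemma br_adj: "length zs = n \<Longrightarrow> Suc i < n \<Longrightarrow> br (zs[i := zs!Suc i, Suc i := zs!i]) = - br zs"
proof -
  assume a: "length zs = n" "Suc i < n"
  have "br (take i zs @ zs!i # zs!Suc i # drop (Suc (Suc i)) zs)
      = - br (take i zs @ zs!Suc i # zs!i # drop (Suc (Suc i)) zs)"
    by (rule br_skew) (use a in simp)
  then show ?thesis using adj_split[of i zs] adj_swap_split[of i zs] a by simp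
qed
lemma br_swap: "length zs = n \<Longrightarrow> i < n \<Longrightarrow> j < n \<Longrightarrow> i \<noteq> j \<Longrightarrow> br (zs[i := zs!j, j := zs!i]) = - br zs"
  by (rule gl_swap[where N=n and G=br, OF br_adj two_v br_add])
lemma br_rep0: "length zs = n \<Longrightarrow> i < j \<Longrightarrow> j < n \<Longrightarrow> zs!i = zs!j \<Longrightarrow> br zs = 0"
  by (rule gl_rep0[where N=n and G=br, OF br_adj two_v])

end


context pna begin

lemma span_map:
  assumes lf: "lin f" and S: "subspace S" and G: "\<And>x. x \<in> G \<Longrightarrow> f x \<in> S" and x: "x \<in> span G"
  shows "f x \<in> S"
proof -
  have sub: "subspace {x. f x \<in> S}" unfolding subspace_def
    using lf S by (auto simp: lin_0 lin_add lin_scale subspace_0 subspace_add subspace_scale)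
  have "span G \<subseteq> {x. f x \<in> S}" by (rule span_minimal) (use G in auto, rule sub)
  then show ?thesis using x by blast
qed

lemma lin_br: "length zs = n \<Longrightarrow> i < n \<Longrightarrow> lin (\<lambda>x. br (zs[i := x]))"
  unfolding lin_def using br_add br_scale by auto

lemma lin_mul_l: "lin (\<lambda>x. mul x c)"
  unfolding lin_def by (auto simp: mul_add_l mul_scale_l)

lemma lin_mul_r: "lin (\<lambda>x. mul c x)"
  unfolding lin_def by (auto simp: mul_add_r mul_scale_r)

lemma br_move:
  assumes S: "\<And>x. x \<in> S \<Longrightarrow> - x \<in> S" and len: "length zs = n" and ip: "i < n" "p < n"
    and H: "\<And>zs'. length zs' = n \<Longrightarrow> zs'!p = zs!i \<Longrightarrow> br zs' \<in> S"
  shows "br zs \<in> S"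
proof (cases "i = p")
  case True then show ?thesis using H len by blast
next
  case False
  let ?z = "zs[i := zs!p, p := zs!i]"
  have "br ?z \<in> S" using H[of ?z] len ip by simp
  moreover have "br ?z = - br zs" using br_swap[OF len ip False] .
  ultimately show ?thesis using S[of "br ?z"] by simp
qed

lemma br_move2:
  assumes S: "\<And>x. x \<in> S \<Longrightarrow> - x \<in> S" and len: "length zs = n" and ij: "i < n" "j < n" "i \<noteq> j"
    and pq: "p < n" "q < n" "p \<noteq> q"
    and H: "\<And>zs'. length zs' = n \<Longrightarrow> zs'!p = zs!i \<Longrightarrow> zs'!q = zs!j \<Longrightarrow> br zs' \<in> S"
  shows "br zs \<in> S"
proof -
  define zs1 where "zs1 = (if i = p then zs else zs[i := zs!p, p := zs!i])"
  define j1 where "j1 = (if i = p then j else if j = p then i else j)"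
  have l1: "length zs1 = n" unfolding zs1_def using len by simp
  have b1: "br zs1 = br zs \<or> br zs1 = - br zs" unfolding zs1_def using br_swap[OF len ij(1) pq(1)] by auto
  have p1: "zs1!p = zs!i" unfolding zs1_def using len ij pq by auto
  have j1p: "j1 \<noteq> p" "j1 < n" unfolding j1_def using ij by auto
  have jj: "zs1!j1 = zs!j" unfolding zs1_def j1_def using len ij pq by (auto simp: nth_list_update)
  define zs2 where "zs2 = (if j1 = q then zs1 else zs1[j1 := zs1!q, q := zs1!j1])"
  have l2: "length zs2 = n" unfolding zs2_def using l1 by simp
  have b2: "br zs2 = br zs1 \<or> br zs2 = - br zs1" unfolding zs2_def using br_swap[OF l1 j1p(2) pq(2)] by auto
  have p2: "zs2!p = zs!i" unfolding zs2_def using l1 j1p pq p1 by (auto simp: nth_list_update)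
  have q2: "zs2!q = zs!j" unfolding zs2_def using l1 j1p pq jj by (auto simp: nth_list_update)
  have "br zs2 \<in> S" using H[OF l2 p2 q2] .
  then show ?thesis using b1 b2 S by (metis minus_minus)
qed

lemma snoc_take: "length zs = n \<Longrightarrow> zs = take (n - 1) zs @ [zs!(n-1)]"
  using snoc_nth[of zs "n - 1"] n2 by simp

lemma cons_tl: "length zs = n \<Longrightarrow> zs = zs!0 # tl zs"
  using n2 by (cases zs) auto

lemma cons2: "length ys = n \<Longrightarrow> ys = ys!0 # ys!1 # drop 2 ys"
proof -
  assume l: "length ys = n"
  obtain a b r where "ys = a # b # r" using l n2 by (cases ys; cases "tl ys") auto
  then show ?thesis by simp
qed

abbreviation D where "D k \<equiv> pderived scl n br mul UNIV k"

definition GD where "GD k = {br (a # b # xs) | a b xs. a \<in> D k \<and> b \<in> D k \<and> length xs = n - 2}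
        \<union> {mul a b | a b. a \<in> D k \<and> b \<in> D k}"

lemma D_Suc: "D (Suc k) = span (GD k)"
  unfolding GD_def by simp

lemma D_sub: "subspace (D k)"
  by (cases k) (auto simp: D_Suc)

lemma D_neg: "x \<in> D k \<Longrightarrow> - x \<in> D k"
  using subspace_neg[OF D_sub] .

lemma D_ideal: "(\<forall>zs i. length zs = n \<longrightarrow> i < n \<longrightarrow> zs!i \<in> D k \<longrightarrow> br zs \<in> D k)
   \<and> (\<forall>a b. a \<in> D k \<longrightarrow> mul a b \<in> D k)"
proof (induction k)
  case 0 then show ?case by simp
next
  case (Suc k)
  have I1: "\<And>zs i. length zs = n \<Longrightarrow> i < n \<Longrightarrow> zs!i \<in> D k \<Longrightarrow> br zs \<in> D k" using Suc by blast
  have I2: "\<And>a b. a \<in> D k \<Longrightarrow> mul a b \<in> D k" using Suc by blast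
  have I2': "\<And>a b. b \<in> D k \<Longrightarrow> mul a b \<in> D k"
  proof -
    fix a b assume "b \<in> D k" then have "mul b a \<in> D k" by (rule I2)
    then show "mul a b \<in> D k" by (simp only: mul_comm)
  qed
  let ?S = "span (GD k)"
  have Ssub: "subspace ?S" by simp
  have Sneg: "\<And>x. x \<in> ?S \<Longrightarrow> - x \<in> ?S" using span_neg .
  have gen1: "br (a # b # xs) \<in> ?S" if "a \<in> D k" "b \<in> D k" "length xs = n - 2" for a b xs
    by (rule span_base) (use that in \<open>auto simp: GD_def\<close>)
  have gen2: "mul a b \<in> ?S" if "a \<in> D k" "b \<in> D k" for a b
    by (rule span_base) (use that in \<open>auto simp: GD_def\<close>)
  have lastbr: "br (P @ [br ys]) \<in> ?S" if "length P = n - 1" "length ys = n" "ys!0 \<in> D k" "ys!1 \<in> D k" for P ys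
  proof -
    have "br (P @ [br ys]) = (\<Sum>l<n. br (ys[l := br (P @ [ys ! l])]))"
      by (rule FI) (use that n2 in auto)
    also have "\<dots> \<in> ?S"
    proof (rule subspace_sum[OF Ssub])
      fix l assume "l \<in> {..<n}"
      then have l: "l < n" by simp
      let ?c = "br (P @ [ys ! l])"
      have c: "?c \<in> D k" if "ys!l \<in> D k"
        using I1[of "P @ [ys!l]" "n - 1"] that \<open>length P = n - 1\<close> n2 by (simp add: nth_append)
      have ys: "ys = ys!0 # ys!1 # drop 2 ys" using cons2 \<open>length ys = n\<close> by blast
      show "br (ys[l := ?c]) \<in> ?S"
      proof (cases l)
        case 0
        have "ys[l := ?c] = ?c # ys!1 # drop 2 ys" using ys 0 by (metis list_update_code(2))
        then show ?thesis using gen1[of ?c "ys!1" "drop 2 ys"] c that 0 by simp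
      next
        case (Suc l')
        show ?thesis
        proof (cases l')
          case 0
          have "ys[l := ?c] = ys!0 # ?c # drop 2 ys" using ys Suc 0
            by (metis One_nat_def list_update_code(2) list_update_code(3))
          then show ?thesis using gen1[of "ys!0" ?c "drop 2 ys"] c that Suc 0 by simp
        next
          case (Suc l'')
          have "ys[l := ?c] = ys!0 # ys!1 # (drop 2 ys)[l'' := ?c]" using ys \<open>l = Suc l'\<close> Suc
            by (metis list_update_code(3))
          then show ?thesis using gen1[of "ys!0" "ys!1" "(drop 2 ys)[l'' := ?c]"] that by simp
        qed
      qed
    qed
    finally show ?thesis .
  qed
  have part1: "br zs \<in> ?S" if zs: "length zs = n" "i < n" "zs!i \<in> ?S" for zs i
  proof -
    have "(\<lambda>x. br (zs[i := x])) (zs!i) \<in> ?S"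
    proof (rule span_map[OF lin_br[OF zs(1,2)] Ssub _ zs(3)])
      fix x assume "x \<in> GD k"
      then consider (B) a b xs where "x = br (a # b # xs)" "a \<in> D k" "b \<in> D k" "length xs = n - 2"
        | (M) a b where "x = mul a b" "a \<in> D k" "b \<in> D k" unfolding GD_def by blast
      then show "br (zs[i := x]) \<in> ?S"
      proof cases
        case B
        show ?thesis
        proof (rule br_move[OF Sneg _ zs(2), of _ "n - 1"])
          show "length (zs[i := x]) = n" using zs by simp
          show "n - 1 < n" using n2 by simp
          fix zs' assume l: "length zs' = n" and e: "zs' ! (n - 1) = zs[i := x] ! i"
          have "zs' = take (n-1) zs' @ [x]" using snoc_take[OF l] e zs by simp
          moreover have "br (take (n-1) zs' @ [br (a # b # xs)]) \<in> ?S"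
            by (rule lastbr) (use l B n2 in auto)
          ultimately show "br zs' \<in> ?S" using B by metis
        qed
      next
        case M
        show ?thesis
        proof (rule br_move[OF Sneg _ zs(2), of _ 0])
          show "length (zs[i := x]) = n" using zs by simp
          show "0 < n" using n2 by simp
          fix zs' assume l: "length zs' = n" and e: "zs' ! 0 = zs[i := x] ! i"
          have zz: "zs' = x # tl zs'" using cons_tl[OF l] e zs by simp
          have lt: "length (tl zs') + 1 = n" using l n2 by simp
          have "br (mul a b # tl zs') = mul a (br (b # tl zs')) + mul b (br (a # tl zs'))"
            by (rule Leib[OF lt])
          moreover have "br (b # tl zs') \<in> D k" using I1[of "b # tl zs'" 0] lt M n2 by simp
          moreover have "br (a # tl zs') \<in> D k" using I1[of "a # tl zs'" 0] lt M n2 by simp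
          ultimately have "br (mul a b # tl zs') \<in> ?S"
            using gen2 M subspace_add[OF Ssub] by simp
          then show "br zs' \<in> ?S" using zz M by metis
        qed
      qed
    qed
    then show ?thesis by simp
  qed
  have part2: "mul a c \<in> ?S" if a: "a \<in> ?S" for a c
  proof (rule span_map[OF lin_mul_l Ssub _ a])
    fix x assume "x \<in> GD k"
    then consider (B) a b xs where "x = br (a # b # xs)" "a \<in> D k" "b \<in> D k" "length xs = n - 2"
      | (M) a b where "x = mul a b" "a \<in> D k" "b \<in> D k" unfolding GD_def by blast
    then show "mul x c \<in> ?S"
    proof cases
      case B
      have lt: "length (b # xs) + 1 = n" using B n2 by simp
      have "br (mul c a # b # xs) = mul c (br (a # b # xs)) + mul a (br (c # b # xs))"
        by (rule Leib[OF lt])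
      moreover have "mul x c = mul c (br (a # b # xs))" using B by (simp only: mul_comm)
      ultimately have eq: "mul x c = br (mul c a # b # xs) - mul a (br (c # b # xs))"
        by (simp add: algebra_simps)
      have "br (mul c a # b # xs) \<in> ?S" using gen1 I2' B by blast
      moreover have "mul a (br (c # b # xs)) \<in> ?S"
      proof (rule gen2)
        show "a \<in> D k" using B by simp
        show "br (c # b # xs) \<in> D k" using I1[of "c # b # xs" 1] B n2 by simp
      qed
      ultimately show ?thesis unfolding eq by (rule subspace_diff[OF Ssub])
    next
      case M
      have "mul x c = mul a (mul b c)" using M mul_assoc by simp
      then show ?thesis using gen2 I2 M by simp
    qed
  qed
  show ?case unfolding D_Suc using part1 part2 by blast
qed

lemma D_br: "length zs = n \<Longrightarrow> i < n \<Longrightarrow> zs!i \<in> D k \<Longrightarrow> br zs \<in> D k"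
  using D_ideal by blast

lemma D_mul: "a \<in> D k \<Longrightarrow> mul a b \<in> D k"
  using D_ideal by blast

lemma D_mul': "b \<in> D k \<Longrightarrow> mul a b \<in> D k"
  using D_mul[of b k a] by (simp only: mul_comm)

lemma D_two: assumes "length zs = n" "i < n" "j < n" "i \<noteq> j" "zs!i \<in> D k" "zs!j \<in> D k"
  shows "br zs \<in> D (Suc k)"
proof (rule br_move2[where S = "D (Suc k)" and p = 0 and q = 1, OF D_neg assms(1-4)])
  show "0 < n" "1 < n" "0 \<noteq> (1::nat)" using n2 by auto
  fix zs' assume l: "length zs' = n" and e: "zs'!0 = zs!i" "zs'!1 = zs!j"
  have ys: "zs' = zs'!0 # zs'!1 # drop 2 zs'" using cons2 l by blast
  have mem: "zs'!0 \<in> D k" "zs'!1 \<in> D k" "length (drop 2 zs') = n - 2" using e assms l by auto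
  have "br (zs'!0 # zs'!1 # drop 2 zs') \<in> GD k" unfolding GD_def using mem by blast
  then have "br (zs'!0 # zs'!1 # drop 2 zs') \<in> D (Suc k)" unfolding D_Suc by (rule span_base)
  then show "br zs' \<in> D (Suc k)" using ys by metis
qed

lemma D_mul2: "a \<in> D k \<Longrightarrow> b \<in> D k \<Longrightarrow> mul a b \<in> D (Suc k)"
  unfolding D_Suc by (rule span_base) (auto simp: GD_def)

lemma D_mono: "D (Suc k) \<subseteq> D k"
  unfolding D_Suc
proof (rule span_minimal[OF _ D_sub])
  show "GD k \<subseteq> D k" unfolding GD_def using D_br[of _ 0] D_mul n2 by auto
qed

end


context pna begin

lemma swap_first_last:
  assumes l: "length xs = n - 1"
  shows "br (xs @ [w]) = - br (w # tl xs @ [xs!0])"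
proof -
  obtain x0 r where xs: "xs = x0 # r" using l n2 by (cases xs) auto
  have lr: "length r = n - 2" using l xs by simp
  let ?z = "xs @ [w]"
  have lz: "length ?z = n" using l n2 by simp
  have "?z[0 := ?z!(n-1), n-1 := ?z!0] = w # r @ [x0]"
  proof -
    have n1: "n - 1 = Suc (length r)" using lr n2 by simp
    show ?thesis unfolding n1 using xs by (simp add: nth_append list_update_append)
  qed
  moreover have "br (?z[0 := ?z!(n-1), n-1 := ?z!0]) = - br ?z"
    by (rule br_swap) (use lz n2 in auto)
  ultimately show ?thesis using xs by simp
qed

lemma Leib_last:
  assumes l: "length xs = n - 1"
  shows "br (xs @ [mul y z]) = mul y (br (xs @ [z])) + mul z (br (xs @ [y]))"
proof -
  let ?R = "tl xs @ [xs!0]"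
  have lR: "length ?R + 1 = n" using l n2 by simp
  have "br (xs @ [mul y z]) = - br (mul y z # ?R)" by (rule swap_first_last[OF l])
  also have "\<dots> = - (mul y (br (z # ?R)) + mul z (br (y # ?R)))" by (simp add: Leib[OF lR])
  also have "br (z # ?R) = - br (xs @ [z])" using swap_first_last[OF l, of z] by simp
  also have "br (y # ?R) = - br (xs @ [y])" using swap_first_last[OF l, of y] by simp
  finally show ?thesis by (simp add: mul_neg_r)
qed

lemma lin_ad: "length X = n - 1 \<Longrightarrow> lin (\<lambda>v. br (X @ [v]))"
proof -
  assume l: "length X = n - 1"
  have "lin (\<lambda>v. br ((X @ [0])[n - 1 := v]))" by (rule lin_br) (use l n2 in auto)
  moreover have "(X @ [0])[n - 1 := v] = X @ [v]" for v using l by (simp add: list_update_append)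
  ultimately show ?thesis by simp
qed

lemma comm_adad:
  assumes lZ: "length Z = n - 1" and lX: "length X = n - 1"
  shows "br (Z @ [br (X @ [v])]) - br (X @ [br (Z @ [v])]) = (\<Sum>i<n-1. br (X[i := br (Z @ [X!i])] @ [v]))"
proof -
  have "br (Z @ [br (X @ [v])]) = (\<Sum>l<n. br ((X @ [v])[l := br (Z @ [(X @ [v]) ! l])]))"
    by (rule FI) (use lZ lX n2 in auto)
  also have "\<dots> = (\<Sum>l<Suc (n-1). br ((X @ [v])[l := br (Z @ [(X @ [v]) ! l])]))" using n2 by simp
  also have "\<dots> = (\<Sum>l<n-1. br ((X @ [v])[l := br (Z @ [(X @ [v]) ! l])])) + br (X @ [br (Z @ [v])])"
    using lX by (simp add: nth_append list_update_append)
  also have "(\<Sum>l<n-1. br ((X @ [v])[l := br (Z @ [(X @ [v]) ! l])])) = (\<Sum>i<n-1. br (X[i := br (Z @ [X!i])] @ [v]))"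
    by (rule sum.cong) (use lX in \<open>auto simp: nth_append list_update_append\<close>)
  finally show ?thesis by simp
qed

definition Fam :: "('v \<Rightarrow> 'v) set" where
  "Fam = {(\<lambda>v. br (X @ [v])) | X. length X = n - 1} \<union> {mul x | x. True}"

definition Aset :: "nat \<Rightarrow> ('v \<Rightarrow> 'v) set" where
  "Aset j = {(\<lambda>v. br (X @ [v])) | X. length X = n - 1 \<and> (\<exists>i<n-1. X!i \<in> D j)} \<union> {mul x | x. x \<in> D j}"

definition Bset :: "nat \<Rightarrow> ('v \<Rightarrow> 'v) set" where
  "Bset j = Aset (Suc j) \<union> {(\<lambda>v. br (X @ [v])) | X. length X = n - 1 \<and>
       (\<exists>i k. i < n-1 \<and> k < n-1 \<and> i \<noteq> k \<and> X!i \<in> D j \<and> X!k \<in> D j)}"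

lemma commsum_mono: "commsum S f g \<Longrightarrow> S \<subseteq> S' \<Longrightarrow> commsum S' f g"
  unfolding commsum_def by blast

lemma commsum_anti:
  assumes "commsum S g f" and neg: "\<And>h. h \<in> S \<Longrightarrow> (\<lambda>v. - h v) \<in> S"
  shows "commsum S f g"
proof -
  obtain hs where hs: "set hs \<subseteq> S" "\<And>v. g (f v) - f (g v) = sum_list (map (\<lambda>h. h v) hs)"
    using assms(1) unfolding commsum_def by blast
  let ?hs = "map (\<lambda>h v. - h v) hs"
  have "set ?hs \<subseteq> S" using hs(1) neg by auto
  moreover have "f (g v) - g (f v) = sum_list (map (\<lambda>h. h v) ?hs)" for v
  proof -
    have "sum_list (map (\<lambda>h. h v) ?hs) = - sum_list (map (\<lambda>h. h v) hs)"
      by (induction hs) auto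
    moreover have "f (g v) - g (f v) = - (g (f v) - f (g v))" by simp
    ultimately show ?thesis using hs(2)[of v] by simp
  qed
  ultimately show ?thesis unfolding commsum_def by blast
qed

lemma cs_adad:
  assumes lZ: "length Z = n - 1" and lX: "length X = n - 1"
    and H: "\<And>i. i < n - 1 \<Longrightarrow> (\<lambda>v. br (X[i := br (Z @ [X!i])] @ [v])) \<in> S"
  shows "commsum S (\<lambda>v. br (Z @ [v])) (\<lambda>v. br (X @ [v]))"
  unfolding commsum_def
proof (intro exI conjI allI)
  let ?hs = "map (\<lambda>i v. br (X[i := br (Z @ [X!i])] @ [v])) [0..<n-1]"
  show "set ?hs \<subseteq> S" using H by auto
  fix v
  have "sum_list (map (\<lambda>h. h v) ?hs) = (\<Sum>i<n-1. br (X[i := br (Z @ [X!i])] @ [v]))"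
    by (simp add: interv_sum_list_conv_sum_set_nat comp_def atLeast0LessThan)
  then show "br (Z @ [br (X @ [v])]) - br (X @ [br (Z @ [v])]) = sum_list (map (\<lambda>h. h v) ?hs)"
    using comm_adad[OF lZ lX] by simp
qed

lemma cs_admul:
  assumes lZ: "length Z = n - 1" and H: "mul (br (Z @ [x])) \<in> S"
  shows "commsum S (\<lambda>v. br (Z @ [v])) (mul x)"
  unfolding commsum_def
proof (intro exI[of _ "[mul (br (Z @ [x]))]"] conjI allI)
  show "set [mul (br (Z @ [x]))] \<subseteq> S" using H by simp
  fix v
  show "br (Z @ [mul x v]) - mul x (br (Z @ [v])) = sum_list (map (\<lambda>h. h v) [mul (br (Z @ [x]))])"
  proof -
    have "br (Z @ [mul x v]) = mul x (br (Z @ [v])) + mul v (br (Z @ [x]))" by (rule Leib_last[OF lZ])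
    moreover have "mul v (br (Z @ [x])) = mul (br (Z @ [x])) v" by (rule mul_comm)
    ultimately show ?thesis by simp
  qed
qed

lemma cs_mulad:
  assumes lX: "length X = n - 1" and H: "mul (- br (X @ [z])) \<in> S"
  shows "commsum S (mul z) (\<lambda>v. br (X @ [v]))"
  unfolding commsum_def
proof (intro exI[of _ "[mul (- br (X @ [z]))]"] conjI allI)
  show "set [mul (- br (X @ [z]))] \<subseteq> S" using H by simp
  fix v
  show "mul z (br (X @ [v])) - br (X @ [mul z v]) = sum_list (map (\<lambda>h. h v) [mul (- br (X @ [z]))])"
  proof -
    have "br (X @ [mul z v]) = mul z (br (X @ [v])) + mul v (br (X @ [z]))" by (rule Leib_last[OF lX])
    moreover have "mul v (br (X @ [z])) = mul (br (X @ [z])) v" by (rule mul_comm)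
    moreover have "mul (- br (X @ [z])) v = - mul (br (X @ [z])) v" by (rule mul_neg_l)
    ultimately show ?thesis by simp
  qed
qed

lemma cs_mulmul: "commsum S (mul x) (mul y)"
  unfolding commsum_def
proof (intro exI[of _ "[]"] conjI allI)
  fix v
  have "mul x (mul y v) = mul (mul x y) v" by (simp only: mul_assoc)
  also have "\<dots> = mul (mul y x) v" by (simp only: mul_comm[of x y])
  also have "\<dots> = mul y (mul x v)" by (simp only: mul_assoc)
  finally show "mul x (mul y v) - mul y (mul x v) = sum_list (map (\<lambda>h. h v) [])" by simp
qed simp

lemma E1: "length Z = n - 1 \<Longrightarrow> p < n - 1 \<Longrightarrow> Z!p \<in> D j \<Longrightarrow> br (Z @ [w]) \<in> D j"
  by (rule D_br[of _ p]) (auto simp: nth_append)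

lemma E2: "length X = n - 1 \<Longrightarrow> w \<in> D j \<Longrightarrow> br (X @ [w]) \<in> D j"
  using n2 by (intro D_br[of _ "n - 1"]) (auto simp: nth_append)

lemma E3: "length Z = n - 1 \<Longrightarrow> p < n - 1 \<Longrightarrow> Z!p \<in> D j \<Longrightarrow> w \<in> D j \<Longrightarrow> br (Z @ [w]) \<in> D (Suc j)"
  using n2 by (intro D_two[of _ p "n - 1"]) (auto simp: nth_append)

lemma E4: "length Z = n - 1 \<Longrightarrow> p < n - 1 \<Longrightarrow> q < n - 1 \<Longrightarrow> p \<noteq> q \<Longrightarrow> Z!p \<in> D j \<Longrightarrow> Z!q \<in> D j
   \<Longrightarrow> br (Z @ [w]) \<in> D (Suc j)"
  by (intro D_two[of _ p q]) (auto simp: nth_append)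

lemma adI: "length X = n - 1 \<Longrightarrow> i < n - 1 \<Longrightarrow> X!i \<in> D j \<Longrightarrow> (\<lambda>v. br (X @ [v])) \<in> Aset j"
  unfolding Aset_def by blast

lemma adI2: "length X = n - 1 \<Longrightarrow> i < n - 1 \<Longrightarrow> k < n - 1 \<Longrightarrow> i \<noteq> k \<Longrightarrow> X!i \<in> D j \<Longrightarrow> X!k \<in> D j
   \<Longrightarrow> (\<lambda>v. br (X @ [v])) \<in> Bset j"
  unfolding Bset_def by blast

lemma mulI: "x \<in> D j \<Longrightarrow> mul x \<in> Aset j"
  unfolding Aset_def by blast

lemma Aset_Bset: "Aset (Suc j) \<subseteq> Bset j"
  unfolding Bset_def by blast

lemma Aset_Fam: "Aset j \<subseteq> Fam"
  unfolding Aset_def Fam_def by blast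

lemma Bset_Fam: "Bset j \<subseteq> Fam"
  using Aset_Fam unfolding Bset_def Fam_def by blast

lemma Aset_cases:
  assumes "g \<in> Aset j"
  obtains X i where "g = (\<lambda>v. br (X @ [v]))" "length X = n - 1" "i < n - 1" "X!i \<in> D j"
    | x where "g = mul x" "x \<in> D j"
  using assms unfolding Aset_def by blast

lemma Fam_cases:
  assumes "g \<in> Fam"
  obtains X where "g = (\<lambda>v. br (X @ [v]))" "length X = n - 1" | x where "g = mul x"
  using assms unfolding Fam_def by blast

lemma Bset_cases:
  assumes "g \<in> Bset j"
  obtains "g \<in> Aset (Suc j)"
    | X i k where "g = (\<lambda>v. br (X @ [v]))" "length X = n - 1" "i < n - 1" "k < n - 1" "i \<noteq> k"
        "X!i \<in> D j" "X!k \<in> D j"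
  using assms unfolding Bset_def by blast

lemma Aset_neg: assumes "h \<in> Aset j" shows "(\<lambda>v. - h v) \<in> Aset j"
  using assms
proof (cases rule: Aset_cases)
  case (1 X i)
  let ?X = "X[i := - (X!i)]"
  have "(\<lambda>v. - h v) = (\<lambda>v. br (?X @ [v]))"
  proof
    fix v
    have l: "length (X @ [v]) = n" using 1 n2 by simp
    have "br ((X @ [v])[i := - ((X @ [v]) ! i)]) = - br ((X @ [v])[i := (X @ [v]) ! i])"
      by (rule br_neg[OF l]) (use 1 n2 in simp)
    then show "- h v = br (?X @ [v])" using 1 by (simp add: nth_append list_update_append)
  qed
  moreover have "(\<lambda>v. br (?X @ [v])) \<in> Aset j"
    by (rule adI[of _ i]) (use 1 D_neg in auto)
  ultimately show ?thesis by simp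
next
  case (2 x)
  have "(\<lambda>v. - h v) = mul (- x)" using 2 by (auto simp: mul_neg_l)
  then show ?thesis using mulI[of "- x" j] D_neg 2 by simp
qed

lemma IA: assumes f: "f \<in> Fam" and g: "g \<in> Aset j" shows "commsum (Aset j) f g"
  using f
proof (cases rule: Fam_cases)
  case (1 Z)
  show ?thesis using g
  proof (cases rule: Aset_cases)
    case (1 X i)
    show ?thesis unfolding \<open>g = _\<close> \<open>f = _\<close>
    proof (rule cs_adad[OF \<open>length Z = n - 1\<close> \<open>length X = n - 1\<close>])
      fix l assume l: "l < n - 1"
      let ?c = "br (Z @ [X!l])"
      show "(\<lambda>v. br (X[l := ?c] @ [v])) \<in> Aset j"
      proof (rule adI[of _ i])
        show "length (X[l := ?c]) = n - 1" using 1 by simp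
        show "i < n - 1" using 1 by simp
        show "X[l := ?c] ! i \<in> D j"
          using 1 E2[OF \<open>length Z = n - 1\<close>, of "X!i"] by (cases "l = i") auto
      qed
    qed
  next
    case (2 x)
    show ?thesis unfolding \<open>g = _\<close> \<open>f = _\<close>
      by (rule cs_admul[OF \<open>length Z = n - 1\<close>]) (rule mulI, rule E2, use 1 2 in auto)
  qed
next
  case (2 z)
  show ?thesis using g
  proof (cases rule: Aset_cases)
    case (1 X i)
    show ?thesis unfolding \<open>g = _\<close> \<open>f = _\<close>
      by (rule cs_mulad[OF \<open>length X = n - 1\<close>]) (rule mulI, rule D_neg, rule E1, use 1 in auto)
  next
    case (2 x)
    show ?thesis unfolding \<open>g = _\<close> \<open>f = _\<close> by (rule cs_mulmul)
  qed
qed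

lemma IB: assumes f: "f \<in> Fam" and g: "g \<in> Bset j" shows "commsum (Bset j) f g"
  using g
proof (cases rule: Bset_cases)
  case 1
  then show ?thesis using IA[OF f] commsum_mono Aset_Bset by blast
next
  case (2 X i k)
  note Xf = this
  show ?thesis using f
  proof (cases rule: Fam_cases)
    case (1 Z)
    show ?thesis unfolding \<open>g = _\<close> \<open>f = _\<close>
    proof (rule cs_adad[OF \<open>length Z = n - 1\<close> \<open>length X = n - 1\<close>])
      fix l assume l: "l < n - 1"
      let ?c = "br (Z @ [X!l])"
      have m: "X[l := ?c] ! m \<in> D j" if "m = i \<or> m = k" for m
        using Xf E2[OF \<open>length Z = n - 1\<close>, of "X!m"] that by (cases "l = m") auto
      show "(\<lambda>v. br (X[l := ?c] @ [v])) \<in> Bset j"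
        by (rule adI2[of _ i k]) (use Xf m in auto)
    qed
  next
    case (2 z)
    show ?thesis unfolding \<open>g = _\<close> \<open>f = _\<close>
    proof (rule cs_mulad[OF \<open>length X = n - 1\<close>])
      have "br (X @ [z]) \<in> D (Suc j)" by (rule E4[of X i k]) (use Xf in auto)
      then show "mul (- br (X @ [z])) \<in> Bset j" using mulI D_neg Aset_Bset by blast
    qed
  qed
qed

lemma DA: assumes f: "f \<in> Aset j" and g: "g \<in> Aset j" shows "commsum (Bset j) f g"
  using f
proof (cases rule: Aset_cases)
  case (1 Z p)
  note Zf = this
  show ?thesis using g
  proof (cases rule: Aset_cases)
    case (1 X i)
    show ?thesis unfolding \<open>g = _\<close> \<open>f = _\<close>
    proof (rule cs_adad[OF \<open>length Z = n - 1\<close> \<open>length X = n - 1\<close>])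
      fix l assume l: "l < n - 1"
      let ?c = "br (Z @ [X!l])"
      show "(\<lambda>v. br (X[l := ?c] @ [v])) \<in> Bset j"
      proof (cases "l = i")
        case True
        have "?c \<in> D (Suc j)" using E3[of Z p j "X!i"] Zf 1 True by auto
        then have "(\<lambda>v. br (X[l := ?c] @ [v])) \<in> Aset (Suc j)"
          by (intro adI[of _ l]) (use 1 l in auto)
        then show ?thesis using Aset_Bset by blast
      next
        case False
        have c: "?c \<in> D j" using E1[of Z p j "X!l"] Zf by auto
        show ?thesis by (rule adI2[of _ l i]) (use 1 l False c in auto)
      qed
    qed
  next
    case (2 x)
    show ?thesis unfolding \<open>g = _\<close> \<open>f = _\<close>
    proof (rule cs_admul[OF \<open>length Z = n - 1\<close>])
      have "br (Z @ [x]) \<in> D (Suc j)" using E3[of Z p j x] Zf 2 by auto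
      then show "mul (br (Z @ [x])) \<in> Bset j" using mulI Aset_Bset by blast
    qed
  qed
next
  case (2 z)
  note zf = this
  show ?thesis using g
  proof (cases rule: Aset_cases)
    case (1 X i)
    show ?thesis unfolding \<open>g = _\<close> \<open>f = _\<close>
    proof (rule cs_mulad[OF \<open>length X = n - 1\<close>])
      have "br (X @ [z]) \<in> D (Suc j)" using E3[of X i j z] zf 1 by auto
      then show "mul (- br (X @ [z])) \<in> Bset j" using mulI D_neg Aset_Bset by blast
    qed
  next
    case (2 x)
    show ?thesis unfolding \<open>g = _\<close> \<open>f = _\<close> by (rule cs_mulmul)
  qed
qed

lemma DB: assumes f: "f \<in> Bset j" and g: "g \<in> Bset j" shows "commsum (Aset (Suc j)) f g"
proof (cases "g \<in> Aset (Suc j)")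
  case True then show ?thesis using IA f Bset_Fam by blast
next
  case gF: False
  show ?thesis
  proof (cases "f \<in> Aset (Suc j)")
    case True
    have "commsum (Aset (Suc j)) g f" using IA True g Bset_Fam by blast
    then show ?thesis using commsum_anti Aset_neg by blast
  next
    case False
    obtain Z p q where fZ: "f = (\<lambda>v. br (Z @ [v]))" "length Z = n - 1" "p < n - 1" "q < n - 1" "p \<noteq> q"
        "Z!p \<in> D j" "Z!q \<in> D j"
      using f False by (cases rule: Bset_cases) auto
    obtain X i k where gX: "g = (\<lambda>v. br (X @ [v]))" "length X = n - 1"
      using g gF by (cases rule: Bset_cases) auto
    show ?thesis unfolding fZ(1) gX(1)
    proof (rule cs_adad[OF fZ(2) gX(2)])
      fix l assume l: "l < n - 1"
      let ?c = "br (Z @ [X!l])"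
      have "?c \<in> D (Suc j)" by (rule E4[of Z p q]) (use fZ in auto)
      then show "(\<lambda>v. br (X[l := ?c] @ [v])) \<in> Aset (Suc j)"
        by (intro adI[of _ l]) (use gX l in auto)
    qed
  qed
qed

definition Ch :: "nat \<Rightarrow> ('v \<Rightarrow> 'v) set" where
  "Ch t = (if even t then Aset (t div 2) else Bset (t div 2))"

lemma Ch_Fam: "Ch t \<subseteq> Fam"
  unfolding Ch_def using Aset_Fam Bset_Fam by auto

lemma Fam_Ch0: "Fam \<subseteq> Ch 0"
proof
  fix g assume "g \<in> Fam"
  then show "g \<in> Ch 0"
  proof (cases rule: Fam_cases)
    case (1 X)
    then show ?thesis unfolding Ch_def using adI[of X 0 0] n2 by simp
  next
    case (2 x)
    then show ?thesis unfolding Ch_def using mulI[of x 0] by simp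
  qed
qed

lemma core_eig:
  assumes W: "subspace W" and WU: "W \<noteq> UNIV"
    and invb: "\<And>X v. length X = n - 1 \<Longrightarrow> v \<in> W \<Longrightarrow> br (X @ [v]) \<in> W"
    and invm: "\<And>x v. v \<in> W \<Longrightarrow> mul x v \<in> W"
    and solv: "D s = {0}"
  shows "\<exists>u. u \<notin> W \<and> (\<forall>g\<in>Fam. \<exists>c. g u - c *s u \<in> W)"
proof -
  have famops: "lin g \<and> (\<forall>w\<in>W. g w \<in> W)" if "g \<in> Fam" for g
    using that
  proof (cases rule: Fam_cases)
    case (1 X) then show ?thesis using lin_ad invb by auto
  next
    case (2 x) then show ?thesis using lin_mul_r invm by auto
  qed
  have "\<exists>u. u \<notin> W \<and> (\<forall>g\<in>Ch 0. \<exists>c. g u - c *s u \<in> W)"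
  proof (rule Lie[OF W WU, where T = "2 * s"])
    show "lin g \<and> (\<forall>w\<in>W. g w \<in> W)" if "g \<in> Ch t" for t g using famops Ch_Fam that by blast
    show "g v \<in> W" if "g \<in> Ch (2 * s)" for g v
    proof -
      have "g \<in> Aset s" using that unfolding Ch_def by simp
      then show ?thesis
      proof (cases rule: Aset_cases)
        case (1 X i)
        have "br (X @ [v]) = 0" by (rule br_zero[of _ i]) (use 1 solv in \<open>auto simp: nth_append\<close>)
        then show ?thesis using 1 subspace_0[OF W] by simp
      next
        case (2 x)
        then show ?thesis using solv mul_0_l subspace_0[OF W] by simp
      qed
    qed
    show "commsum (Ch (Suc t)) f g" if "t < 2 * s" "f \<in> Ch t" "g \<in> Ch (Suc t)" for t f g
    proof -
      have fF: "f \<in> Fam" using that Ch_Fam by blast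
      show ?thesis
      proof (cases "even t")
        case True
        then have "Ch (Suc t) = Bset (t div 2)" unfolding Ch_def by simp
        then show ?thesis using IB[OF fF] that by simp
      next
        case False
        then have "Ch (Suc t) = Aset (Suc (t div 2))" unfolding Ch_def by (simp add: odd_Suc_div_two)
        then show ?thesis using IA[OF fF] that by simp
      qed
    qed
    show "commsum (Ch (Suc t)) f g" if "t < 2 * s" "f \<in> Ch t" "g \<in> Ch t" for t f g
    proof (cases "even t")
      case True
      then have "Ch (Suc t) = Bset (t div 2)" "Ch t = Aset (t div 2)" unfolding Ch_def by simp_all
      then show ?thesis using DA that by simp
    next
      case False
      then have "Ch (Suc t) = Aset (Suc (t div 2))" "Ch t = Bset (t div 2)" unfolding Ch_def by (simp_all add: odd_Suc_div_two)
      then show ?thesis using DB that by simp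
    qed
  qed
  then show ?thesis using Fam_Ch0 by blast
qed

end


context pna begin

lemma wt_uniq:
  assumes W: "subspace W" and uW: "u \<notin> W" and a: "v - a *s u \<in> W" and b: "v - b *s u \<in> W"
  shows "a = b"
proof (rule ccontr)
  assume ne: "a \<noteq> b"
  have "(b - a) *s u = (v - a *s u) - (v - b *s u)" by (simp add: scale_left_diff_distrib)
  also have "\<dots> \<in> W" using subspace_diff[OF W a b] .
  finally have "inverse (b - a) *s ((b - a) *s u) \<in> W" using subspace_scale[OF W] by blast
  then have "(inverse (b - a) * (b - a)) *s u \<in> W" by (simp only: scale_scale)
  then have "u \<in> W" using ne by simp
  then show False using uW by simp
qed

lemma wt_add:
  assumes W: "subspace W" and "v1 - a *s u \<in> W" "v2 - b *s u \<in> W"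
  shows "(v1 + v2) - (a + b) *s u \<in> W"
proof -
  have eq: "(v1 + v2) - (a + b) *s u = (v1 - a *s u) + (v2 - b *s u)" by (simp add: scale_left_distrib algebra_simps)
  show ?thesis unfolding eq by (rule subspace_add[OF W assms(2,3)])
qed

lemma wt_comp:
  assumes W: "subspace W" and lf: "lin f" and fW: "\<And>w. w \<in> W \<Longrightarrow> f w \<in> W"
    and fu: "f u - b *s u \<in> W" and v: "v - a *s u \<in> W"
  shows "f v - (a * b) *s u \<in> W"
proof -
  have eq: "f v - (a * b) *s u = f (v - a *s u) + a *s (f u - b *s u)"
    using lf by (simp add: lin_diff lin_scale scale_right_diff_distrib algebra_simps)
  show ?thesis unfolding eq by (rule subspace_add[OF W fW[OF v] subspace_scale[OF W fu]])
qed

lemma wt_sum: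
  assumes W: "subspace W" and fin: "finite I" and h: "\<And>i. i \<in> I \<Longrightarrow> g i - c i *s u \<in> W"
  shows "(\<Sum>i\<in>I. g i) - (\<Sum>i\<in>I. c i) *s u \<in> W"
  using fin h
proof (induction I rule: finite_induct)
  case empty then show ?case using subspace_0[OF W] by simp
next
  case (insert i I)
  have "(\<Sum>i\<in>insert i I. g i) - (\<Sum>i\<in>insert i I. c i) *s u = (g i + (\<Sum>i\<in>I. g i)) - (c i + (\<Sum>i\<in>I. c i)) *s u"
    using insert(1,2) by simp
  also have "\<dots> \<in> W" by (rule wt_add[OF W]) (use insert in auto)
  finally show ?case .
qed

lemma mul_wt0:
  assumes W: "subspace W" and uW: "u \<notin> W"
    and invm: "\<And>x v. v \<in> W \<Longrightarrow> mul x v \<in> W"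
    and evm: "\<And>x. \<exists>c. mul x u - c *s u \<in> W"
    and solv: "D s = {0}"
  shows "mul x u \<in> W"
proof -
  have "\<forall>x\<in>D (s - d). mul x u \<in> W" if "d \<le> s" for d
    using that
  proof (induction d)
    case 0 then show ?case using solv mul_0_l subspace_0[OF W] by simp
  next
    case (Suc d)
    show ?case
    proof
      fix x assume x: "x \<in> D (s - Suc d)"
      obtain c where c: "mul x u - c *s u \<in> W" using evm by blast
      have "mul x (mul x u) - (c * c) *s u \<in> W"
        by (rule wt_comp[OF W lin_mul_r invm c c])
      moreover have "mul x x \<in> D (s - d)" using D_mul2[OF x x] Suc.prems by (simp add: Suc_diff_Suc)
      then have "mul (mul x x) u \<in> W" using Suc by simp
      then have "mul x (mul x u) - 0 *s u \<in> W" by (simp add: mul_assoc)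
      ultimately have "c * c = 0" using wt_uniq[OF W uW] by blast
      then have "c = 0" by simp
      then show "mul x u \<in> W" using c by simp
    qed
  qed
  from this[of s] show ?thesis by simp
qed

lemma wt_neg:
  assumes W: "subspace W" and "v - a *s u \<in> W" shows "(- v) - (- a) *s u \<in> W"
proof -
  have eq: "(- v) - (- a) *s u = - (v - a *s u)" by (simp add: scale_minus_left)
  show ?thesis unfolding eq by (rule subspace_neg[OF W assms(2)])
qed

context
  fixes W u
  assumes W: "subspace W" and uW: "u \<notin> W"
    and invb: "\<And>X v. length X = n - 1 \<Longrightarrow> v \<in> W \<Longrightarrow> br (X @ [v]) \<in> W"
    and invm: "\<And>x v. v \<in> W \<Longrightarrow> mul x v \<in> W"
    and evb: "\<And>X. length X = n - 1 \<Longrightarrow> \<exists>c. br (X @ [u]) - c *s u \<in> W"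
    and evm0: "\<And>x. mul x u \<in> W"
begin

definition lam where "lam X = (SOME c. br (X @ [u]) - c *s u \<in> W)"

lemma lamP: "length X = n - 1 \<Longrightarrow> br (X @ [u]) - lam X *s u \<in> W"
  unfolding lam_def using evb by (rule someI_ex)

lemma lam_eq: "length X = n - 1 \<Longrightarrow> br (X @ [u]) - c *s u \<in> W \<Longrightarrow> lam X = c"
  using wt_uniq[OF W uW lamP] by blast

lemma lam_add: assumes l: "length X = n - 1" and i: "i < n - 1"
  shows "lam (X[i := x + y]) = lam (X[i := x]) + lam (X[i := y])"
proof (rule lam_eq)
  show "length (X[i := x + y]) = n - 1" using l by simp
  have l': "length (X @ [u]) = n" using l n2 by simp
  have "br (X[i := x + y] @ [u]) = br (X[i := x] @ [u]) + br (X[i := y] @ [u])"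
    using br_add[OF l', of i x y] i l by (simp add: list_update_append)
  then show "br (X[i := x + y] @ [u]) - (lam (X[i := x]) + lam (X[i := y])) *s u \<in> W"
    using wt_add[OF W lamP lamP, of "X[i := x]" "X[i := y]"] l by simp
qed

lemma lam_adj: assumes l: "length X = n - 1" and i: "Suc i < n - 1"
  shows "lam (X[i := X!Suc i, Suc i := X!i]) = - lam X"
proof (rule lam_eq)
  show "length (X[i := X!Suc i, Suc i := X!i]) = n - 1" using l by simp
  have l': "length (X @ [u]) = n" using l n2 by simp
  have "br ((X @ [u])[i := (X @ [u])!Suc i, Suc i := (X @ [u])!i]) = - br (X @ [u])"
    by (rule br_adj[OF l']) (use i in simp)
  then have "br (X[i := X!Suc i, Suc i := X!i] @ [u]) = - br (X @ [u])"
    using i l by (simp add: list_update_append nth_append)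
  then show "br (X[i := X!Suc i, Suc i := X!i] @ [u]) - (- lam X) *s u \<in> W"
    using wt_neg[OF W lamP[OF l]] by simp
qed

lemma lam_swap: "length X = n - 1 \<Longrightarrow> i < n - 1 \<Longrightarrow> j < n - 1 \<Longrightarrow> i \<noteq> j
   \<Longrightarrow> lam (X[i := X!j, j := X!i]) = - lam X"
  by (rule gl_swap[where N = "n - 1" and G = lam, OF lam_adj two_zero_field lam_add])

lemma lam_R1: assumes lZ: "length Z = n - 1" and lY: "length Y = n - 1"
  shows "(\<Sum>i<n-1. lam (Y[i := br (Z @ [Y!i])])) = 0"
proof -
  have fZ: "lin (\<lambda>v. br (Z @ [v]))" by (rule lin_ad[OF lZ])
  have fY: "lin (\<lambda>v. br (Y @ [v]))" by (rule lin_ad[OF lY])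
  have A: "br (Z @ [br (Y @ [u])]) - (lam Y * lam Z) *s u \<in> W"
    by (rule wt_comp[OF W fZ _ lamP[OF lZ] lamP[OF lY]]) (use invb lZ in auto)
  have B: "br (Y @ [br (Z @ [u])]) - (lam Z * lam Y) *s u \<in> W"
    by (rule wt_comp[OF W fY _ lamP[OF lY] lamP[OF lZ]]) (use invb lY in auto)
  have AB: "(br (Z @ [br (Y @ [u])]) - br (Y @ [br (Z @ [u])])) - 0 *s u \<in> W"
    using wt_add[OF W A wt_neg[OF W B]] by (simp add: mult.commute)
  have S: "(\<Sum>i<n-1. br (Y[i := br (Z @ [Y!i])] @ [u])) - (\<Sum>i<n-1. lam (Y[i := br (Z @ [Y!i])])) *s u \<in> W"
    by (rule wt_sum[OF W]) (use lamP lY in auto)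
  show ?thesis using wt_uniq[OF W uW AB, unfolded comm_adad[OF lZ lY], OF S] by simp
qed

lemma Lam_zero: assumes lz: "length zs = n" and lx: "length xs = n - 2"
  shows "lam (br zs # xs) = 0"
proof -
  obtain m where nm: "n = Suc (Suc m)" using n2 by (metis add_2_eq_Suc le_Suc_ex)
  define F where "F zs xs = lam (br zs # xs)" for zs xs
  have lneg: "lam ((- a) # xs) = - lam (a # xs)" if "length xs = m" for a xs
  proof -
    have l: "length (a # xs) = n - 1" using that nm by simp
    have "lam ((a # xs)[0 := a + - a]) = lam ((a # xs)[0 := a]) + lam ((a # xs)[0 := - a])"
      by (rule lam_add[OF l]) (use nm in simp)
    moreover have "lam ((a # xs)[0 := 0]) = lam ((a # xs)[0 := 0]) + lam ((a # xs)[0 := 0])"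
      using lam_add[OF l, of 0 0 0] nm by simp
    ultimately have "lam ((- a) # xs) + lam (a # xs) = 0" by simp
    then show ?thesis by (simp add: eq_neg_iff_add_eq_0)
  qed
  have "combhyp m F" unfolding combhyp_def
  proof (intro conjI allI impI)
    fix zs xs :: "'v list" and i :: nat and x y :: 'v
    assume a: "length zs = Suc (Suc m)" "length xs = m" "i < Suc (Suc m)"
    have "br (zs[i := x + y]) = br (zs[i := x]) + br (zs[i := y])" using br_add a nm by simp
    moreover have l: "length (br zs # xs) = n - 1" using a nm by simp
    ultimately show "F (zs[i := x + y]) xs = F (zs[i := x]) xs + F (zs[i := y]) xs"
      unfolding F_def using lam_add[OF l, of 0 "br (zs[i := x])" "br (zs[i := y])"] nm by simp
  next
    fix zs xs :: "'v list" and i :: nat and x y :: 'v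
    assume a: "length zs = Suc (Suc m)" "length xs = m" "i < m"
    have l: "length (br zs # xs) = n - 1" using a nm by simp
    show "F zs (xs[i := x + y]) = F zs (xs[i := x]) + F zs (xs[i := y])"
      unfolding F_def using lam_add[OF l, of "Suc i" x y] a nm by simp
  next
    fix zs xs :: "'v list" and i :: nat
    assume a: "length zs = Suc (Suc m)" "length xs = m" "Suc i < Suc (Suc m)"
    have "br (zs[i := zs ! Suc i, Suc i := zs ! i]) = - br zs" using br_adj a nm by simp
    then show "F (zs[i := zs ! Suc i, Suc i := zs ! i]) xs = - F zs xs"
      unfolding F_def using lneg[OF a(2)] by simp
  next
    fix zs xs :: "'v list" and i :: nat
    assume a: "length zs = Suc (Suc m)" "length xs = m" "Suc i < m"
    have l: "length (br zs # xs) = n - 1" using a nm by simp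
    have "lam ((br zs # xs)[Suc i := (br zs # xs) ! Suc (Suc i), Suc (Suc i) := (br zs # xs) ! Suc i])
        = - lam (br zs # xs)"
      by (rule lam_adj[OF l]) (use a nm in simp)
    then show "F zs (xs[i := xs ! Suc i, Suc i := xs ! i]) = - F zs xs" unfolding F_def by simp
  next
    fix Z xs :: "'v list" and y :: 'v
    assume a: "length Z = Suc m" "length xs = m"
    have lZ: "length Z = n - 1" and lY: "length (y # xs) = n - 1" using a nm by auto
    have R: "(\<Sum>i<Suc m. lam ((y # xs)[i := br (Z @ [(y # xs)!i])])) = 0"
      using lam_R1[OF lZ lY] nm by simp
    have sw: "lam (y # xs[j := br (Z @ [xs!j])]) = - lam (br (Z @ [xs!j]) # xs[j := y])" if j: "j < m" for j
    proof -
      let ?X = "y # xs[j := br (Z @ [xs!j])]"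
      have lX: "length ?X = n - 1" using a nm by simp
      have "lam (?X[0 := ?X ! Suc j, Suc j := ?X ! 0]) = - lam ?X"
        by (rule lam_swap[OF lX]) (use j nm in auto)
      moreover have "?X[0 := ?X ! Suc j, Suc j := ?X ! 0] = br (Z @ [xs!j]) # xs[j := y]"
        using j a by simp
      ultimately show ?thesis by simp
    qed
    have "(\<Sum>i<Suc m. lam ((y # xs)[i := br (Z @ [(y # xs)!i])]))
        = lam (br (Z @ [y]) # xs) + (\<Sum>j<m. lam (y # xs[j := br (Z @ [xs!j])]))"
      by (subst sum.lessThan_Suc_shift) simp
    also have "(\<Sum>j<m. lam (y # xs[j := br (Z @ [xs!j])])) = (\<Sum>j<m. - lam (br (Z @ [xs!j]) # xs[j := y]))"
      by (rule sum.cong) (use sw in auto)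
    finally have "lam (br (Z @ [y]) # xs) = (\<Sum>j<m. lam (br (Z @ [xs!j]) # xs[j := y]))"
      using R by (simp add: sum_negf)
    then show "F (Z @ [y]) xs = (\<Sum>j<m. F (Z @ [xs ! j]) (xs[j := y]))" unfolding F_def by simp
  qed
  then have "F zs xs = 0" using comb[of m F zs xs] lz lx nm by simp
  then show ?thesis unfolding F_def .
qed

lemma psq_van: assumes a: "a \<in> psquare scl n br mul" and lx: "length xs = n - 2"
  shows "br (a # xs @ [u]) \<in> W"
proof -
  have l0: "length (0 # xs @ [u]) = n" using lx n2 by simp
  have lin0: "lin (\<lambda>a. br ((0 # xs @ [u])[0 := a]))" by (rule lin_br[OF l0]) (use n2 in simp)
  have sp: "a \<in> span ({br xs | xs. length xs = n} \<union> {mul a b | a b. True})"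
    using a unfolding psquare_def .
  have "(\<lambda>a. br ((0 # xs @ [u])[0 := a])) a \<in> W"
  proof (rule span_map[OF lin0 W _ sp])
    fix x assume "x \<in> {br xs | xs. length xs = n} \<union> {mul a b | a b. True}"
    then consider (B) zs where "x = br zs" "length zs = n" | (M) b c where "x = mul b c" by blast
    then show "br ((0 # xs @ [u])[0 := x]) \<in> W"
    proof cases
      case B
      have lX: "length (br zs # xs) = n - 1" using lx n2 by simp
      have "br ((br zs # xs) @ [u]) - lam (br zs # xs) *s u \<in> W" by (rule lamP[OF lX])
      then show ?thesis using Lam_zero[OF B(2) lx] B(1) by simp
    next
      case M
      have lt: "length (xs @ [u]) + 1 = n" using lx n2 by simp
      have lc: "length (c # xs) = n - 1" and lb: "length (b # xs) = n - 1" using lx n2 by auto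
      have e: "br (mul b c # xs @ [u]) = mul b (br (c # xs @ [u])) + mul c (br (b # xs @ [u]))"
        by (rule Leib[OF lt])
      have t1: "mul b (br (c # xs @ [u])) - (lam (c # xs) * 0) *s u \<in> W"
        using wt_comp[OF W lin_mul_r invm _ lamP[OF lc], of b 0] evm0 by simp
      have t2: "mul c (br (b # xs @ [u])) - (lam (b # xs) * 0) *s u \<in> W"
        using wt_comp[OF W lin_mul_r invm _ lamP[OF lb], of c 0] evm0 by simp
      have "mul b (br (c # xs @ [u])) \<in> W" using t1 by simp
      moreover have "mul c (br (b # xs @ [u])) \<in> W" using t2 by simp
      ultimately show ?thesis using M e subspace_add[OF W] by simp
    qed
  qed
  then show ?thesis by simp
qed

end


end


context pna begin

abbreviation Isq where "Isq \<equiv> psquare scl n br mul"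

lemma core_full:
  assumes W: "subspace W" and WU: "W \<noteq> UNIV"
    and invb: "\<And>X v. length X = n - 1 \<Longrightarrow> v \<in> W \<Longrightarrow> br (X @ [v]) \<in> W"
    and invm: "\<And>x v. v \<in> W \<Longrightarrow> mul x v \<in> W"
    and solv: "D s = {0}"
  shows "\<exists>u. u \<notin> W \<and> (\<forall>X. length X = n - 1 \<longrightarrow> (\<exists>c. br (X @ [u]) - c *s u \<in> W))
            \<and> (\<forall>x. mul x u \<in> W) \<and> (\<forall>a xs. a \<in> Isq \<longrightarrow> length xs = n - 2 \<longrightarrow> br (a # xs @ [u]) \<in> W)"
proof -
  obtain u where uW: "u \<notin> W" and ev: "\<forall>g\<in>Fam. \<exists>c. g u - c *s u \<in> W"
    using core_eig[OF W WU invb invm solv] by blast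
  have evb: "\<exists>c. br (X @ [u]) - c *s u \<in> W" if "length X = n - 1" for X
  proof -
    have "(\<lambda>v. br (X @ [v])) \<in> Fam" unfolding Fam_def using that by blast
    then show ?thesis using ev by fastforce
  qed
  have evm: "\<exists>c. mul x u - c *s u \<in> W" for x
  proof -
    have "mul x \<in> Fam" unfolding Fam_def by blast
    then show ?thesis using ev by fastforce
  qed
  have evm0: "mul x u \<in> W" for x by (rule mul_wt0[OF W uW invm evm solv])
  have "br (a # xs @ [u]) \<in> W" if "a \<in> Isq" "length xs = n - 2" for a xs
    by (rule psq_van[OF W uW invb invm evb evm0 that])
  then show ?thesis using uW evb evm0 by blast
qed

definition inv_sp :: "'v set \<Rightarrow> bool" where
  "inv_sp W \<longleftrightarrow> subspace W \<and> (\<forall>X v. length X = n - 1 \<longrightarrow> v \<in> W \<longrightarrow> br (X @ [v]) \<in> W)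
     \<and> (\<forall>x v. v \<in> W \<longrightarrow> mul x v \<in> W)"

primrec Zs :: "nat \<Rightarrow> 'v set" where
  "Zs 0 = UNIV"
| "Zs (Suc k) = span ({br zs | zs. length zs = n \<and> (\<exists>i j. i < n \<and> j < n \<and> i \<noteq> j \<and> zs!i \<in> Isq \<and> zs!j \<in> Zs k)}
      \<union> {mul a v | a v. a \<in> Isq \<and> v \<in> Zs k})"

lemma plower_Zs: "plower scl n br mul Isq k \<subseteq> Zs k"
proof (induction k)
  case 0 then show ?case by simp
next
  case (Suc k)
  show ?case unfolding plower.simps Zs.simps
  proof (rule span_mono)
    show "{br (a # b # xs) |a b xs. a \<in> plower scl n br mul Isq k \<and> b \<in> Isq \<and> length xs = n - 2} \<union>
      {mul a b |a b. a \<in> plower scl n br mul Isq k \<and> b \<in> Isq}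
      \<subseteq> {br zs |zs. length zs = n \<and> (\<exists>i j. i < n \<and> j < n \<and> i \<noteq> j \<and> zs ! i \<in> Isq \<and> zs ! j \<in> Zs k)} \<union>
         {mul a v |a v. a \<in> Isq \<and> v \<in> Zs k}"
    proof
      fix x assume "x \<in> {br (a # b # xs) |a b xs. a \<in> plower scl n br mul Isq k \<and> b \<in> Isq \<and> length xs = n - 2} \<union>
        {mul a b |a b. a \<in> plower scl n br mul Isq k \<and> b \<in> Isq}"
      then consider (B) a b xs where "x = br (a # b # xs)" "a \<in> plower scl n br mul Isq k" "b \<in> Isq" "length xs = n - 2"
        | (M) a b where "x = mul a b" "a \<in> plower scl n br mul Isq k" "b \<in> Isq" by blast
      then show "x \<in> {br zs |zs. length zs = n \<and> (\<exists>i j. i < n \<and> j < n \<and> i \<noteq> j \<and> zs ! i \<in> Isq \<and> zs ! j \<in> Zs k)} \<union>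
         {mul a v |a v. a \<in> Isq \<and> v \<in> Zs k}"
      proof cases
        case B
        have "length (a # b # xs) = n" "(a # b # xs) ! 1 \<in> Isq" "(a # b # xs) ! 0 \<in> Zs k"
          using B Suc n2 by auto
        then have "\<exists>i j. i < n \<and> j < n \<and> i \<noteq> j \<and> (a # b # xs) ! i \<in> Isq \<and> (a # b # xs) ! j \<in> Zs k"
          using n2 by (intro exI[of _ 1] exI[of _ 0]) auto
        then show ?thesis using B \<open>length (a # b # xs) = n\<close> by blast
      next
        case M
        have "x = mul b a" using M mul_comm by simp
        then show ?thesis using M Suc by blast
      qed
    qed
  qed
qed

lemma flag:
  assumes solv: "D s = {0}"
  shows "inv_sp W \<Longrightarrow> \<exists>k. Zs k \<subseteq> W"
proof (induction "dim (UNIV :: 'v set) - dim W" arbitrary: W rule: less_induct)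
  case less
  note Wi = less.prems[unfolded inv_sp_def]
  have W: "subspace W" using Wi by blast
  have invb: "\<And>X v. length X = n - 1 \<Longrightarrow> v \<in> W \<Longrightarrow> br (X @ [v]) \<in> W" using Wi by blast
  have invm: "\<And>x v. v \<in> W \<Longrightarrow> mul x v \<in> W" using Wi by blast
  show ?case
  proof (cases "W = UNIV")
    case True then show ?thesis by (intro exI[of _ 0]) simp
  next
    case False
    obtain u where uW: "u \<notin> W" and evb: "\<And>X. length X = n - 1 \<Longrightarrow> \<exists>c. br (X @ [u]) - c *s u \<in> W"
      and evm0: "\<And>x. mul x u \<in> W"
      and psq: "\<And>a xs. a \<in> Isq \<Longrightarrow> length xs = n - 2 \<Longrightarrow> br (a # xs @ [u]) \<in> W"
      using core_full[OF W False invb invm solv] by blast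
    define W' where "W' = span (insert u W)"
    have W'sub: "subspace W'" unfolding W'_def by simp
    have spW: "span W = W" using W by simp
    have decomp: "\<exists>c w. w \<in> W \<and> v = w + c *s u" if vW': "v \<in> W'" for v
    proof -
      have "\<exists>c. v - c *s u \<in> span W" using vW' unfolding W'_def span_breakdown_eq .
      then obtain c where "v - c *s u \<in> span W" by blast
      then have "v - c *s u \<in> W" using spW by simp
      then show ?thesis by (intro exI[of _ c] exI[of _ "v - c *s u"]) simp
    qed
    have WW': "W \<subseteq> W'" unfolding W'_def using span_superset by blast
    have uW': "u \<in> W'" unfolding W'_def by (simp add: span_base)
    have inc: "\<And>w c. w \<in> W \<Longrightarrow> w + c *s u \<in> W'"
      using WW' uW' subspace_add[OF W'sub] subspace_scale[OF W'sub] by blast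
    have invW': "inv_sp W'" unfolding inv_sp_def
    proof (intro conjI allI impI W'sub)
      fix X :: "'v list" and v :: 'v assume X: "length X = n - 1" and v: "v \<in> W'"
      obtain c w where w: "w \<in> W" "v = w + c *s u" using decomp[OF v] by blast
      obtain d where d: "br (X @ [u]) - d *s u \<in> W" using evb[OF X] by blast
      have lf: "lin (\<lambda>v. br (X @ [v]))" by (rule lin_ad[OF X])
      have "br (X @ [v]) = (br (X @ [w]) + c *s (br (X @ [u]) - d *s u)) + (c * d) *s u"
        using w by (simp add: lin_add[OF lf] lin_scale[OF lf] scale_right_diff_distrib)
      moreover have "br (X @ [w]) + c *s (br (X @ [u]) - d *s u) \<in> W"
        using invb[OF X w(1)] d subspace_add[OF W] subspace_scale[OF W] by blast
      ultimately show "br (X @ [v]) \<in> W'" using inc by simp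
    next
      fix x v :: 'v assume v: "v \<in> W'"
      obtain c w where w: "w \<in> W" "v = w + c *s u" using decomp[OF v] by blast
      have "mul x v = mul x w + c *s mul x u" using w by (simp add: mul_add_r mul_scale_r)
      moreover have "mul x w + c *s mul x u \<in> W"
        using invm[OF w(1)] evm0 subspace_add[OF W] subspace_scale[OF W] by blast
      ultimately show "mul x v \<in> W'" using WW' by auto
    qed
    have "dim W < dim W'"
    proof (rule dim_psubset)
      have s1: "span W' = W'" using W'sub by simp
      show "span W \<subset> span W'" unfolding s1 spW using WW' uW' uW by blast
    qed
    moreover have "dim W' \<le> dim (UNIV :: 'v set)" by (rule dim_subset) simp
    ultimately have "dim (UNIV :: 'v set) - dim W' < dim (UNIV :: 'v set) - dim W" by simp
    then obtain k where k: "Zs k \<subseteq> W'" using less.hyps invW' by blast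
    have "Zs (Suc k) \<subseteq> W" unfolding Zs.simps
    proof (rule span_minimal[OF _ W])
      show "{br zs |zs. length zs = n \<and> (\<exists>i j. i < n \<and> j < n \<and> i \<noteq> j \<and> zs ! i \<in> Isq \<and> zs ! j \<in> Zs k)} \<union>
          {mul a v |a v. a \<in> Isq \<and> v \<in> Zs k} \<subseteq> W"
      proof
        fix x assume "x \<in> {br zs |zs. length zs = n \<and> (\<exists>i j. i < n \<and> j < n \<and> i \<noteq> j \<and> zs ! i \<in> Isq \<and> zs ! j \<in> Zs k)} \<union>
          {mul a v |a v. a \<in> Isq \<and> v \<in> Zs k}"
        then consider (B) zs i j where "x = br zs" "length zs = n" "i < n" "j < n" "i \<noteq> j" "zs!i \<in> Isq" "zs!j \<in> Zs k"
          | (M) a v where "x = mul a v" "a \<in> Isq" "v \<in> Zs k" by blast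
        then show "x \<in> W"
        proof cases
          case B
          have "br zs \<in> W"
          proof (rule br_move2[where p = 0 and q = "n - 1", OF _ B(2-5)])
            show "\<And>x. x \<in> W \<Longrightarrow> - x \<in> W" using subspace_neg[OF W] .
            show "0 < n" "n - 1 < n" "0 \<noteq> n - 1" using n2 by auto
            fix zs' assume l: "length zs' = n" and e0: "zs'!0 = zs!i" and e1: "zs'!(n-1) = zs!j"
            define X where "X = take (n - 1) zs'"
            have lX: "length X = n - 1" unfolding X_def using l by simp
            have zs': "zs' = X @ [zs!j]" unfolding X_def using snoc_take[OF l] e1 by simp
            have Xne: "X \<noteq> []" using lX n2 by auto
            have "X!0 = zs'!0" unfolding X_def using n2 by (simp add: nth_take)
            then have hX: "hd X = zs!i" using Xne e0 by (simp add: hd_conv_nth)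
            have X0: "X = (zs!i) # tl X" using Xne hX by (metis list.collapse)
            have v: "zs!j \<in> W'" using B(7) k by blast
            obtain c w where w: "w \<in> W" "zs!j = w + c *s u" using decomp[OF v] by blast
            have lf: "lin (\<lambda>v. br (X @ [v]))" by (rule lin_ad[OF lX])
            have "br (X @ [u]) \<in> W"
            proof -
              have "br ((zs!i) # tl X @ [u]) \<in> W" by (rule psq) (use B lX in auto)
              then show ?thesis using X0 by (metis append_Cons)
            qed
            moreover have "br (X @ [zs!j]) = br (X @ [w]) + c *s br (X @ [u])"
              using w by (simp add: lin_add[OF lf] lin_scale[OF lf])
            ultimately have "br (X @ [zs!j]) \<in> W"
              using invb[OF lX w(1)] subspace_add[OF W] subspace_scale[OF W] by simp
            then show "br zs' \<in> W" using zs' by simp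
          qed
          then show ?thesis using B by simp
        next
          case M
          have v: "v \<in> W'" using M k by blast
          obtain c w where w: "w \<in> W" "v = w + c *s u" using decomp[OF v] by blast
          have "mul a v = mul a w + c *s mul a u" using w by (simp add: mul_add_r mul_scale_r)
          then show ?thesis using M invm[OF w(1)] evm0 subspace_add[OF W] subspace_scale[OF W] by simp
        qed
      qed
    qed
    then show ?thesis by blast
  qed
qed

lemma inv_zero: "inv_sp {0}"
  unfolding inv_sp_def subspace_def
  using lin_0[OF lin_ad] mul_0_r by auto

lemma hard: assumes solv: "D s = {0}" shows "pnilpotent scl n br mul Isq"
proof -
  obtain k where k: "Zs k \<subseteq> {0}" using flag[OF solv inv_zero] by blast
  have "plower scl n br mul Isq k \<subseteq> {0}" using plower_Zs k by blast
  moreover have "0 \<in> plower scl n br mul Isq k"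
    by (cases k) (simp_all add: psquare_def span_zero)
  ultimately have "plower scl n br mul Isq k = {0}" by blast
  then show ?thesis unfolding pnilpotent_def by blast
qed

lemma pder_shift: "pderived scl n br mul UNIV (Suc k) = pderived scl n br mul Isq k"
proof (induction k)
  case 0
  have e: "{br (a # b # xs) |a b xs. a \<in> UNIV \<and> b \<in> UNIV \<and> length xs = n - 2} = {br xs | xs. length xs = n}"
  proof
    show "{br (a # b # xs) |a b xs. a \<in> UNIV \<and> b \<in> UNIV \<and> length xs = n - 2} \<subseteq> {br xs | xs. length xs = n}"
    proof
      fix x assume "x \<in> {br (a # b # xs) |a b xs. a \<in> UNIV \<and> b \<in> UNIV \<and> length xs = n - 2}"
      then obtain a b xs where "x = br (a # b # xs)" "length xs = n - 2" by blast
      moreover have "length (a # b # xs) = n" using \<open>length xs = n - 2\<close> n2 by simp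
      ultimately show "x \<in> {br xs | xs. length xs = n}" by blast
    qed
    show "{br xs | xs. length xs = n} \<subseteq> {br (a # b # xs) |a b xs. a \<in> UNIV \<and> b \<in> UNIV \<and> length xs = n - 2}"
    proof
      fix x assume "x \<in> {br xs | xs. length xs = n}"
      then obtain zs where zs: "x = br zs" "length zs = n" by blast
      have "zs = zs!0 # zs!1 # drop 2 zs" using cons2[OF zs(2)] .
      moreover have "length (drop 2 zs) = n - 2" using zs by simp
      ultimately show "x \<in> {br (a # b # xs) |a b xs. a \<in> UNIV \<and> b \<in> UNIV \<and> length xs = n - 2}"
        using zs(1) by (metis (mono_tags, lifting) UNIV_I mem_Collect_eq)
    qed
  qed
  have e2: "{mul a b |a b. a \<in> UNIV \<and> b \<in> UNIV} = {mul a b |a b. True}" by simp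
  show ?case unfolding pderived.simps(2)[of scl n br mul UNIV 0] pderived.simps(1) psquare_def e e2 ..
next
  case (Suc k)
  show ?case
    unfolding pderived.simps(2)[of scl n br mul UNIV "Suc k"] pderived.simps(2)[of scl n br mul Isq k] Suc.IH ..
qed

lemma pder_sub: "pderived scl n br mul Isq k \<subseteq> Isq"
proof (cases k)
  case 0 then show ?thesis by simp
next
  case (Suc k')
  show ?thesis unfolding Suc pderived.simps(2)
  proof (rule span_minimal)
    show "subspace Isq" unfolding psquare_def by simp
    show "{br (a # b # xs) |a b xs. a \<in> pderived scl n br mul Isq k' \<and> b \<in> pderived scl n br mul Isq k' \<and> length xs = n - 2} \<union>
      {mul a b |a b. a \<in> pderived scl n br mul Isq k' \<and> b \<in> pderived scl n br mul Isq k'} \<subseteq> Isq"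
    proof
      fix x assume "x \<in> {br (a # b # xs) |a b xs. a \<in> pderived scl n br mul Isq k' \<and> b \<in> pderived scl n br mul Isq k' \<and> length xs = n - 2} \<union>
        {mul a b |a b. a \<in> pderived scl n br mul Isq k' \<and> b \<in> pderived scl n br mul Isq k'}"
      then consider (B) a b xs where "x = br (a # b # xs)" "length xs = n - 2" | (M) a b where "x = mul a b" by blast
      then show "x \<in> Isq"
      proof cases
        case B
        have "length (a # b # xs) = n" using B n2 by simp
        then have "x \<in> {br xs | xs. length xs = n} \<union> {mul a b | a b. True}" using B by blast
        then show ?thesis unfolding psquare_def by (rule span_base)
      next
        case M
        then have "x \<in> {br xs | xs. length xs = n} \<union> {mul a b | a b. True}" by blast
        then show ?thesis unfolding psquare_def by (rule span_base)
      qed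
    qed
  qed
qed

lemma pder_low: "pderived scl n br mul Isq k \<subseteq> plower scl n br mul Isq k"
proof (induction k)
  case 0 then show ?case by simp
next
  case (Suc k)
  show ?case unfolding pderived.simps(2) plower.simps(2)
    by (rule span_mono) (use Suc.IH pder_sub in blast)
qed

lemma easy: assumes "pnilpotent scl n br mul Isq" shows "psolvable scl n br mul UNIV"
proof -
  obtain s where s: "plower scl n br mul Isq s = {0}" using assms unfolding pnilpotent_def by blast
  have "pderived scl n br mul UNIV (Suc s) \<subseteq> {0}" using pder_shift pder_low s by blast
  moreover have "0 \<in> pderived scl n br mul UNIV (Suc s)" by (simp add: span_zero)
  ultimately have "pderived scl n br mul UNIV (Suc s) = {0}" by blast
  then show ?thesis unfolding psolvable_def by blast
qed

lemma main: "psolvable scl n br mul UNIV \<longleftrightarrow> pnilpotent scl n br mul Isq"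
proof
  assume "psolvable scl n br mul UNIV"
  then obtain s where "D s = {0}" unfolding psolvable_def by blast
  then show "pnilpotent scl n br mul Isq" by (rule hard)
next
  assume "pnilpotent scl n br mul Isq"
  then show "psolvable scl n br mul UNIV" by (rule easy)
qed

end

theorem proposition5p9:
  fixes scl :: "'k::{alg_closed_field, field_char_0} \<Rightarrow> 'v::ab_group_add \<Rightarrow> 'v"
    and n :: nat and br :: "'v list \<Rightarrow> 'v" and mul :: "'v \<Rightarrow> 'v \<Rightarrow> 'v"
  assumes "n \<ge> 2"
    and "poisson_nlie scl n br mul"
    and "\<exists>B. finite B \<and> module.span scl B = UNIV"
  shows "psolvable scl n br mul UNIV \<longleftrightarrow> pnilpotent scl n br mul (psquare scl n br mul)"
proof -
  have vs: "vector_space scl" using assms(2) unfolding poisson_nlie_def by blast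
  obtain B where B: "finite B" "module.span scl B = UNIV" using assms(3) by blast
  obtain B' where B': "B' \<subseteq> B" "\<not> module.dependent scl B'" "B \<subseteq> module.span scl B'"
    using vector_space.maximal_independent_subset[OF vs, of B] by blast
  have fin: "finite B'" using B(1) B'(1) finite_subset by blast
  have md: "module scl" using vs module_iff_vector_space by blast
  have "module.span scl B \<subseteq> module.span scl B'"
    using module.span_minimal[OF md B'(3) module.subspace_span[OF md]] .
  then have sp: "module.span scl B' = UNIV" using B(2) by blast
  have fd: "finite_dimensional_vector_space scl B'"
    unfolding finite_dimensional_vector_space_def finite_dimensional_vector_space_axioms_def
    using vs fin B'(2) sp by blast
  have pn: "pna scl B' n br mul" unfolding pna_def pna_axioms_def fdv_def using fd assms(1,2) by blast
  interpret P: pna scl B' n br mul by (rule pn)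
  show ?thesis by (rule P.main)
qed


end
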